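(* The space of orientation-reversing isometries $\phi$ of $X$ with $\phi^2=\mathrm{Id}$ has exactly two connected components: one is the space of inversions $\{i_x\mid x\in X\}$, and the other is the space of involutions whose fixed point set is a totally geodesic hyperbolic plane of type II.
   Context: $X=\mathrm{SL}_3(\mathbb R)/\mathrm{SO}(3)$ is the Riemannian symmetric space. For $M\in\mathrm{SL}_3(\mathbb R)$ let $M^*=(M^{-1})^{T}$; every orientation-reversing isometry of $X$ has the form $[M]\mapsto[AM^*]$ for some $A\in\mathrm{SL}_3(\mathbb R)$. The inversion $i_x$ at $x\in X$ is the isometry fixing $x$ with differential $-\mathrm{Id}$ on $T_xX$; for $x=[A]$, $i_x([M])=[AA^TM^*]$. A totally geodesic hyperbolic plane of type II is an image under an isometry of $X$ of the plane $\mathrm{SO}(2,1)/\mathrm{SO}(2)\subset X$ (the orbit of $[\mathrm{Id}]$ under $\mathrm{SO}(2,1)\subset \mathrm{SL}_3(\mathbb R)$). *)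

theory Defs
  imports "HOL-Analysis.Analysis"
begin

type_synonym mat3 = "real^3^3"

definition SL3 :: "mat3 set" where
  "SL3 = {M. det M = 1}"

definition SO3 :: "mat3 set" where
  "SO3 = {K. det K = 1 \<and> transpose K ** K = mat 1}"

definition J21 :: mat3 where
  "J21 = (\<chi> i j. if i = j then (if i = 3 then -1 else 1) else 0)"

definition SO21 :: "mat3 set" where
  "SO21 = {M. det M = 1 \<and> transpose M ** J21 ** M = J21}"

definition mstar :: "mat3 \<Rightarrow> mat3" where
  "mstar M = transpose (matrix_inv M)"

text \<open>The point [M] of X = SL3/SO3 is the coset M SO(3).\<close>
definition cls :: "mat3 \<Rightarrow> mat3 set" where
  "cls M = (\<lambda>K. M ** K) ` SO3"

definition Xsp :: "mat3 set set" where
  "Xsp = cls ` SL3"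

definition rep :: "mat3 set \<Rightarrow> mat3" where
  "rep x = (SOME M. M \<in> x)"

definition topX :: "mat3 set topology" where
  "topX = topology (\<lambda>U. U \<subseteq> Xsp \<and> openin (top_of_set SL3) {M \<in> SL3. cls M \<in> U})"

definition lmap :: "mat3 \<Rightarrow> mat3 set \<Rightarrow> mat3 set" where
  "lmap A = restrict (\<lambda>x. cls (A ** rep x)) Xsp"

definition orev :: "mat3 \<Rightarrow> mat3 set \<Rightarrow> mat3 set" where
  "orev A = restrict (\<lambda>x. cls (A ** mstar (rep x))) Xsp"

definition isomX :: "(mat3 set \<Rightarrow> mat3 set) set" where
  "isomX = {lmap A | A. A \<in> SL3} \<union> {orev A | A. A \<in> SL3}"

definition orevX :: "(mat3 set \<Rightarrow> mat3 set) set" where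
  "orevX = {orev A | A. A \<in> SL3}"

definition inversion :: "mat3 set \<Rightarrow> mat3 set \<Rightarrow> mat3 set" where
  "inversion x = (let A = rep x in restrict (\<lambda>y. cls (A ** transpose A ** mstar (rep y))) Xsp)"

definition H2std :: "mat3 set set" where
  "H2std = cls ` SO21"

definition type2_plane :: "mat3 set set \<Rightarrow> bool" where
  "type2_plane P \<longleftrightarrow> (\<exists>g \<in> isomX. P = g ` H2std)"

definition fixset :: "(mat3 set \<Rightarrow> mat3 set) \<Rightarrow> mat3 set set" where
  "fixset \<phi> = {x \<in> Xsp. \<phi> x = x}"

definition InvolRev :: "(mat3 set \<Rightarrow> mat3 set) set" where
  "InvolRev = {\<phi> \<in> orevX. \<forall>x \<in> Xsp. \<phi> (\<phi> x) = x}"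

text \<open>Topology on maps X -> X: pointwise convergence (coincides with compact-open on isometries).\<close>
definition mapsX_top :: "(mat3 set \<Rightarrow> mat3 set) topology" where
  "mapsX_top = product_topology (\<lambda>_. topX) Xsp"

end

theory Submission
  imports Defs
begin


section \<open>Basic 3x3 matrix facts\<close>

lemma inv3:
  fixes M :: mat3 assumes "det M \<noteq> 0"
  shows "M ** matrix_inv M = mat 1" "matrix_inv M ** M = mat 1"
proof -
  have "invertible M" using assms invertible_det_nz by blast
  then have "\<exists>A'. M ** A' = mat 1 \<and> A' ** M = mat 1" unfolding invertible_def by blast
  then have "M ** matrix_inv M = mat 1 \<and> matrix_inv M ** M = mat 1"
    unfolding matrix_inv_def by (rule someI_ex)
  then show "M ** matrix_inv M = mat 1" "matrix_inv M ** M = mat 1" by auto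
qed

lemma inv_unique:
  fixes M N :: mat3 assumes "M ** N = mat 1"
  shows "matrix_inv M = N"
proof -
  have d: "det M \<noteq> 0" using assms det_mul[of M N] by auto
  have "matrix_inv M = matrix_inv M ** (M ** N)" using assms by simp
  also have "\<dots> = N" by (simp add: matrix_mul_assoc inv3[OF d])
  finally show ?thesis .
qed

lemma det_inv3: fixes M :: mat3 assumes "det M \<noteq> 0" shows "det (matrix_inv M) = 1 / det M"
  using det_mul[of M "matrix_inv M"] inv3[OF assms] assms by (simp add: field_simps)

lemma inv_mul3: fixes M N :: mat3 assumes "det M \<noteq> 0" "det N \<noteq> 0"
  shows "matrix_inv (M ** N) = matrix_inv N ** matrix_inv M"
  apply (rule inv_unique)
  by (metis assms inv3 matrix_mul_assoc matrix_mul_rid)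

lemma inv_transpose3: fixes M :: mat3 assumes "det M \<noteq> 0"
  shows "matrix_inv (transpose M) = transpose (matrix_inv M)"
  apply (rule inv_unique)
  by (metis assms inv3(2) matrix_transpose_mul transpose_mat)

lemma inv_inv3: fixes M :: mat3 assumes "det M \<noteq> 0"
  shows "matrix_inv (matrix_inv M) = M"
  by (rule inv_unique) (rule inv3(2)[OF assms])

lemma det_mstar: fixes M :: mat3 assumes "det M \<noteq> 0" shows "det (mstar M) = 1 / det M"
  by (simp add: mstar_def det_inv3 assms)

lemma mstar_mul: fixes M N :: mat3 assumes "det M \<noteq> 0" "det N \<noteq> 0"
  shows "mstar (M ** N) = mstar M ** mstar N"
  by (simp add: mstar_def inv_mul3 assms matrix_transpose_mul)

lemma mstar_mstar: fixes M :: mat3 assumes "det M \<noteq> 0" shows "mstar (mstar M) = M"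
  using assms
  by (simp add: mstar_def inv_transpose3 det_inv3 inv_inv3)

lemma mstar_tr1: fixes M :: mat3 assumes "det M \<noteq> 0" shows "transpose M ** mstar M = mat 1"
  by (metis assms inv3(2) matrix_transpose_mul mstar_def transpose_mat)

lemma mstar_tr2: fixes M :: mat3 assumes "det M \<noteq> 0" shows "mstar M ** transpose M = mat 1"
  by (metis assms inv3(1) matrix_transpose_mul mstar_def transpose_mat)

lemma mstar_transpose: fixes M :: mat3 assumes "det M \<noteq> 0"
  shows "mstar (transpose M) = transpose (mstar M)"
  by (simp add: mstar_def inv_transpose3 assms)


lemma SO3_D: "K \<in> SO3 \<Longrightarrow> det K = 1 \<and> transpose K ** K = mat 1 \<and> K ** transpose K = mat 1"
  unfolding SO3_def using matrix_left_right_inverse by blast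

lemma mstar_SO3: "K \<in> SO3 \<Longrightarrow> mstar K = K"
  unfolding mstar_def using SO3_D
  by (metis inv_transpose3 inv_unique transpose_transpose zero_neq_one)


lemma SO3_mul: "K \<in> SO3 \<Longrightarrow> L \<in> SO3 \<Longrightarrow> K ** L \<in> SO3"
  unfolding SO3_def
  by (simp add: det_mul matrix_transpose_mul)
     (metis matrix_mul_assoc matrix_mul_lid)


lemma SO3_tr: "K \<in> SO3 \<Longrightarrow> transpose K \<in> SO3"
proof -
  assume K: "K \<in> SO3"
  have "det K = 1" "K ** transpose K = mat 1" using SO3_D[OF K] by auto
  then show ?thesis unfolding SO3_def by simp
qed

lemma SO3_I: "mat 1 \<in> SO3" unfolding SO3_def by simp

lemma SL3_mul: "A \<in> SL3 \<Longrightarrow> B \<in> SL3 \<Longrightarrow> A ** B \<in> SL3"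
  unfolding SL3_def by (simp add: det_mul)

lemma SL3_tr: "A \<in> SL3 \<Longrightarrow> transpose A \<in> SL3"
  unfolding SL3_def by simp

lemma SL3_mstar: "A \<in> SL3 \<Longrightarrow> mstar A \<in> SL3"
  unfolding SL3_def by (simp add: det_mstar)

lemma SL3_inv: "A \<in> SL3 \<Longrightarrow> matrix_inv A \<in> SL3"
  unfolding SL3_def by (simp add: det_inv3)

lemma SO3_SL3: "K \<in> SO3 \<Longrightarrow> K \<in> SL3"
  unfolding SO3_def SL3_def by simp

section \<open>Points of X\<close>

lemma cls_mul_SO3: assumes "K \<in> SO3" shows "cls (M ** K) = cls M"
proof -
  have KK: "K ** transpose K = mat 1" using SO3_D[OF assms] by blast
  have img: "(\<lambda>L. K ** L) ` SO3 = SO3"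
  proof
    show "(\<lambda>L. K ** L) ` SO3 \<subseteq> SO3"
    proof
      fix x assume "x \<in> (\<lambda>L. K ** L) ` SO3"
      then obtain L where "L \<in> SO3" "x = K ** L" by blast
      then show "x \<in> SO3" using SO3_mul[OF assms] by blast
    qed
    show "SO3 \<subseteq> (\<lambda>L. K ** L) ` SO3"
    proof
      fix L assume L: "L \<in> SO3"
      have "K ** (transpose K ** L) = (K ** transpose K) ** L" by (rule matrix_mul_assoc)
      then have "L = K ** (transpose K ** L)" using KK by simp
      moreover have "transpose K ** L \<in> SO3" using SO3_mul SO3_tr assms L by blast
      ultimately show "L \<in> (\<lambda>L. K ** L) ` SO3" by blast
    qed
  qed
  have "cls (M ** K) = (\<lambda>L. M ** L) ` ((\<lambda>L. K ** L) ` SO3)"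
    unfolding cls_def image_image by (simp add: matrix_mul_assoc)
  then show ?thesis unfolding cls_def using img by simp
qed

lemma mem_cls: "M \<in> cls M"
  unfolding cls_def using SO3_I by (metis image_eqI matrix_mul_rid)

lemma cls_memD: "N \<in> cls M \<Longrightarrow> \<exists>K\<in>SO3. N = M ** K"
  unfolding cls_def by auto

lemma rep_cls: "\<exists>K\<in>SO3. rep (cls M) = M ** K"
proof -
  have "rep (cls M) \<in> cls M" unfolding rep_def using mem_cls by (rule someI)
  then show ?thesis by (rule cls_memD)
qed

lemma cls_rep: assumes "x \<in> Xsp" shows "cls (rep x) = x"
proof -
  obtain M where "x = cls M" using assms unfolding Xsp_def by blast
  moreover obtain K where "K \<in> SO3" "rep (cls M) = M ** K" using rep_cls by blast
  ultimately show ?thesis using cls_mul_SO3 by simp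
qed

lemma rep_SL3: assumes "x \<in> Xsp" shows "rep x \<in> SL3"
proof -
  obtain M where M: "M \<in> SL3" "x = cls M" using assms unfolding Xsp_def by blast
  moreover obtain K where "K \<in> SO3" "rep (cls M) = M ** K" using rep_cls by blast
  ultimately show ?thesis using SL3_mul[OF M(1) SO3_SL3] by simp
qed

lemma cls_Xsp: "M \<in> SL3 \<Longrightarrow> cls M \<in> Xsp"
  unfolding Xsp_def by (rule imageI)

lemma Xsp_cases: "x \<in> Xsp \<Longrightarrow> (\<And>M. M \<in> SL3 \<Longrightarrow> x = cls M \<Longrightarrow> P) \<Longrightarrow> P"
  unfolding Xsp_def by blast

lemma cls_eq_gram:
  fixes M N :: mat3
  assumes "det M = det N" "det M \<noteq> 0"
  shows "cls M = cls N \<longleftrightarrow> M ** transpose M = N ** transpose N"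
proof
  assume "cls M = cls N"
  then have "N \<in> cls M" using mem_cls by metis
  then obtain K where K: "K \<in> SO3" "N = M ** K" using cls_memD by blast
  have KK: "K ** transpose K = mat 1" using SO3_D[OF K(1)] by blast
  have "N ** transpose N = M ** (K ** transpose K) ** transpose M"
    unfolding K(2) by (simp add: matrix_transpose_mul matrix_mul_assoc)
  then show "M ** transpose M = N ** transpose N" using KK by simp
next
  assume G: "M ** transpose M = N ** transpose N"
  define K where "K = matrix_inv M ** N"
  have N: "N = M ** K" unfolding K_def by (simp add: matrix_mul_assoc inv3[OF assms(2)])
  have "K ** transpose K = matrix_inv M ** (N ** transpose N) ** transpose (matrix_inv M)"
    unfolding K_def by (simp add: matrix_transpose_mul matrix_mul_assoc)
  also have "\<dots> = (matrix_inv M ** M) ** (transpose M ** transpose (matrix_inv M))"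
    unfolding G[symmetric] by (simp add: matrix_mul_assoc)
  also have "\<dots> = mat 1"
  proof -
    have T: "transpose M ** transpose (matrix_inv M) = mat 1"
      using matrix_transpose_mul[of "matrix_inv M" M] inv3(2)[OF assms(2)] by simp
    show ?thesis unfolding T inv3(2)[OF assms(2)] by simp
  qed
  finally have KK: "K ** transpose K = mat 1" .
  have "det K = 1" unfolding K_def using assms by (simp add: det_mul det_inv3)
  moreover have "transpose K ** K = mat 1" using KK matrix_left_right_inverse[of K "transpose K"]
    by simp
  ultimately have "K \<in> SO3" unfolding SO3_def by simp
  then show "cls M = cls N" using N cls_mul_SO3 by simp
qed

lemma gram_cls_rep: "rep (cls M) ** transpose (rep (cls M)) = M ** transpose M"
proof -
  obtain K where K: "K \<in> SO3" "rep (cls M) = M ** K" using rep_cls by blast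
  have KK: "K ** transpose K = mat 1" using SO3_D[OF K(1)] by blast
  have "rep (cls M) ** transpose (rep (cls M)) = M ** (K ** transpose K) ** transpose M"
    unfolding K(2) by (simp add: matrix_transpose_mul matrix_mul_assoc)
  then show ?thesis using KK by simp
qed

lemma orev_cls: assumes "M \<in> SL3" shows "orev A (cls M) = cls (A ** mstar M)"
proof -
  obtain K where K: "K \<in> SO3" "rep (cls M) = M ** K" using rep_cls by blast
  have dM: "det M \<noteq> 0" using assms unfolding SL3_def by simp
  have dK: "det K \<noteq> 0" using SO3_D[OF K(1)] by simp
  have "mstar (M ** K) = mstar M ** K"
    using mstar_mul[OF dM dK] mstar_SO3[OF K(1)] by simp
  then have "orev A (cls M) = cls ((A ** mstar M) ** K)"
    unfolding orev_def using K(2) cls_Xsp[OF assms] by (simp add: matrix_mul_assoc)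
  then show ?thesis using cls_mul_SO3[OF K(1)] by simp
qed

lemma lmap_cls: assumes "M \<in> SL3" shows "lmap B (cls M) = cls (B ** M)"
proof -
  obtain K where K: "K \<in> SO3" "rep (cls M) = M ** K" using rep_cls by blast
  then have "lmap B (cls M) = cls ((B ** M) ** K)"
    unfolding lmap_def using cls_Xsp[OF assms] by (simp add: matrix_mul_assoc)
  then show ?thesis using cls_mul_SO3[OF K(1)] by simp
qed

lemma inversion_cls: "inversion (cls M) = orev (M ** transpose M)"
proof -
  have "inversion (cls M) = restrict (\<lambda>y. cls ((rep (cls M) ** transpose (rep (cls M))) ** mstar (rep y))) Xsp"
    unfolding inversion_def Let_def by (simp add: matrix_mul_assoc)
  also have "\<dots> = orev (M ** transpose M)" unfolding gram_cls_rep orev_def ..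
  finally show ?thesis .
qed

lemma orev_Xsp: assumes "A \<in> SL3" "x \<in> Xsp" shows "orev A x \<in> Xsp"
proof -
  obtain M where M: "M \<in> SL3" "x = cls M" using assms(2) unfolding Xsp_def by blast
  show ?thesis unfolding M(2) orev_cls[OF M(1)]
    by (rule cls_Xsp, rule SL3_mul[OF assms(1) SL3_mstar[OF M(1)]])
qed

lemma lmap_Xsp: assumes "A \<in> SL3" "x \<in> Xsp" shows "lmap A x \<in> Xsp"
proof -
  obtain M where M: "M \<in> SL3" "x = cls M" using assms(2) unfolding Xsp_def by blast
  show ?thesis unfolding M(2) lmap_cls[OF M(1)]
    by (rule cls_Xsp, rule SL3_mul[OF assms(1) M(1)])
qed



definition dg :: "real^3 \<Rightarrow> mat3" where
  "dg v = (\<chi> i j. if i = j then v$i else 0)"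

definition outer :: "real^3 \<Rightarrow> real^3 \<Rightarrow> mat3" where
  "outer u v = (\<chi> i j. u$i * v$j)"

definition qf :: "mat3 \<Rightarrow> real^3 \<Rightarrow> real" where
  "qf A x = x \<bullet> (A *v x)"

lemmas bf = vec_eq_iff forall_3 matrix_matrix_mult_def sum_3 transpose_def mat_def det_3
  inner_vec_def matrix_vector_mult_def dg_def outer_def

lemma sym3: "transpose (A::mat3) = A \<Longrightarrow> A$2$1 = A$1$2 \<and> A$3$1 = A$1$3 \<and> A$3$2 = A$2$3"
proof -
  assume a: "transpose (A::mat3) = A"
  have "A$j$i = A$i$j" for i j using arg_cong[OF a, of "\<lambda>M. M$i$j"] by (simp add: transpose_def)
  then show ?thesis by simp
qed

lemma sym3I: "A$2$1 = A$1$2 \<Longrightarrow> A$3$1 = A$1$3 \<Longrightarrow> A$3$2 = A$2$3 \<Longrightarrow> transpose (A::mat3) = A"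
  by (simp add: bf)

lemma sym_inner: fixes A :: mat3 and x y :: "real^3" assumes "transpose A = A" shows "x \<bullet> (A *v y) = y \<bullet> (A *v x)"
  using sym3[OF assms] by (simp add: bf algebra_simps)

lemma qf_expand: assumes "transpose A = A"
  shows "qf A (u + t *\<^sub>R w) = qf A u + 2 * t * (w \<bullet> (A *v u)) + t^2 * qf A w"
  using sym3[OF assms] by (simp add: qf_def bf algebra_simps power2_eq_square)

lemma qf_scale: "qf A (c *\<^sub>R x) = c^2 * qf A x"
  by (simp add: qf_def bf algebra_simps power2_eq_square)

lemma max_crit:
  fixes A :: mat3 and u w :: "real^3"
  assumes sym: "transpose A = A" and u: "u \<bullet> u = 1" and wu: "w \<bullet> u = 0"
    and le: "\<And>t. qf A (u + t *\<^sub>R w) \<le> qf A u * ((u + t *\<^sub>R w) \<bullet> (u + t *\<^sub>R w))"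
  shows "w \<bullet> (A *v u) = 0"
proof -
  define b where "b = w \<bullet> (A *v u)"
  define K where "K = qf A u * (w \<bullet> w) - qf A w"
  have nn: "(u + t *\<^sub>R w) \<bullet> (u + t *\<^sub>R w) = 1 + t^2 * (w \<bullet> w)" for t
    using u wu by (simp add: inner_add_left inner_add_right inner_commute power2_eq_square)
  have key: "2 * t * b \<le> t^2 * K" for t
    using le[of t] unfolding qf_expand[OF sym] nn b_def K_def by (simp add: algebra_simps)
  define c where "c = \<bar>K\<bar> + 1"
  have pos: "c > 0" unfolding c_def by simp
  define t where "t = b / c"
  have tc: "t * c = b" unfolding t_def using pos by simp
  have "2 * t * b \<le> t^2 * K" by (rule key)
  then have "(2 * t * b) * c^2 \<le> (t^2 * K) * c^2" using pos by (simp add: mult_right_mono)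
  moreover have "(2 * t * b) * c^2 = 2 * b * c * (t * c)" by (simp add: power2_eq_square algebra_simps)
  moreover have "(t^2 * K) * c^2 = K * (t * c)^2" by (simp add: power2_eq_square algebra_simps)
  ultimately have "2 * b * c * b \<le> K * b^2" unfolding tc by simp
  then have "2 * b * b * (\<bar>K\<bar> + 1) \<le> b * b * K" unfolding c_def by (simp add: power2_eq_square algebra_simps)
  then have "b * b * (2 * \<bar>K\<bar> + 2 - K) \<le> 0" by (simp add: algebra_simps)
  moreover have p: "2 * \<bar>K\<bar> + 2 - K > 0" by simp
  ultimately have "b * b \<le> 0"
  proof -
    assume h: "b * b * (2 * \<bar>K\<bar> + 2 - K) \<le> 0"
    show "b * b \<le> 0"
    proof (rule ccontr)
      assume "\<not> b * b \<le> 0"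
      then have "b * b > 0" by simp
      then have "b * b * (2 * \<bar>K\<bar> + 2 - K) > 0" using p by (rule mult_pos_pos)
      then show False using h by simp
    qed
  qed
  then have "b * b = 0" using zero_le_square[of b] by linarith
  then show ?thesis unfolding b_def by simp
qed

lemma max_on:
  fixes A :: mat3 and u w :: "real^3"
  assumes sym: "transpose A = A"
    and S1: "\<And>x y t. x \<in> S \<Longrightarrow> y \<in> S \<Longrightarrow> x + t *\<^sub>R y \<in> S"
    and S2: "\<And>x c. x \<in> S \<Longrightarrow> c *\<^sub>R x \<in> S"
    and uS: "u \<in> S" and u: "u \<bullet> u = 1"
    and mx: "\<forall>y\<in>S. y \<bullet> y = 1 \<longrightarrow> qf A y \<le> qf A u"
    and wS: "w \<in> S" and wu: "w \<bullet> u = 0"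
  shows "w \<bullet> (A *v u) = 0"
proof (rule max_crit[OF sym u wu])
  fix t :: real
  define x where "x = u + t *\<^sub>R w"
  have xS: "x \<in> S" unfolding x_def using S1 uS wS by blast
  have nn: "x \<bullet> x = 1 + t^2 * (w \<bullet> w)"
    unfolding x_def using u wu by (simp add: inner_add_left inner_add_right inner_commute power2_eq_square)
  have xpos: "x \<bullet> x > 0" unfolding nn by (simp add: add_pos_nonneg)
  define y where "y = (1 / sqrt (x \<bullet> x)) *\<^sub>R x"
  have yS: "y \<in> S" unfolding y_def using S2 xS by blast
  have yy: "y \<bullet> y = 1" unfolding y_def using xpos by simp
  have "qf A y = qf A x / (x \<bullet> x)" unfolding y_def qf_scale using xpos
    by (simp add: power_divide)
  moreover have "qf A y \<le> qf A u" using mx yS yy by blast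
  ultimately have "qf A x / (x \<bullet> x) \<le> qf A u" by simp
  then show "qf A x \<le> qf A u * (x \<bullet> x)" using xpos by (simp add: divide_le_eq)
qed

lemma qf_cont: "continuous_on S (qf A)"
  unfolding qf_def by (intro continuous_intros linear_continuous_on matrix_vector_mul_linear)

lemma perp_exists: fixes u :: "real^3" assumes "u \<bullet> u = 1"
  obtains v where "v \<bullet> v = 1" "v \<bullet> u = 0"
proof -
  define w :: "real^3" where "w = (if u$1 \<noteq> 0 \<or> u$2 \<noteq> 0 then vector [- u$2, u$1, 0] else vector [0, - u$3, u$2])"
  have wu: "w \<bullet> u = 0" unfolding w_def by (simp add: inner_vec_def sum_3)
  have "w \<bullet> w \<noteq> 0"
  proof (cases "u$1 \<noteq> 0 \<or> u$2 \<noteq> 0")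
    case True then show ?thesis unfolding w_def by (auto simp: inner_vec_def sum_3 add_nonneg_eq_0_iff)
  next
    case False
    then have "u$3 \<noteq> 0" using assms by (auto simp: inner_vec_def sum_3)
    then show ?thesis using False unfolding w_def by (auto simp: inner_vec_def sum_3 add_nonneg_eq_0_iff)
  qed
  then have wpos: "w \<bullet> w > 0" by (simp add: inner_gt_zero_iff)
  define v where "v = (1 / sqrt (w \<bullet> w)) *\<^sub>R w"
  have "v \<bullet> v = 1" unfolding v_def using wpos by simp
  moreover have "v \<bullet> u = 0" unfolding v_def using wu by simp
  ultimately show ?thesis by (rule that)
qed



lemma rows_inner: "((M::mat3) ** transpose M)$i$j = M$i \<bullet> M$j"
  by (simp add: matrix_matrix_mult_def transpose_def inner_vec_def)

lemma conj_entry: "((V::mat3) ** A ** transpose V)$i$j = V$i \<bullet> (A *v V$j)"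
  by (simp add: matrix_matrix_mult_def transpose_def inner_vec_def matrix_vector_mult_def
      sum_distrib_left sum_distrib_right algebra_simps sum_3)

lemma cross_self_norm: "cross3 a b \<bullet> cross3 a b = (a \<bullet> a) * (b \<bullet> b) - (a \<bullet> b)^2"
  by (simp add: cross3_simps power2_eq_square)

lemma det_rows_cross: "det (vector [a, b, cross3 a b] :: mat3) = cross3 a b \<bullet> cross3 a b"
  by (simp add: cross3_simps)

lemma dg_eqI: assumes "\<And>i j. i \<noteq> j \<Longrightarrow> (D::mat3)$i$j = 0" shows "D = dg (\<chi> i. D$i$i)"
  using assms by (auto simp: vec_eq_iff dg_def)

theorem spectral3:
  fixes A :: mat3 assumes sym: "transpose A = A"
  obtains R lam where "R ** transpose R = mat 1" "transpose R ** R = mat 1" "det R = 1"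
    "A = R ** dg lam ** transpose R"
proof -
  have c0: "compact (sphere (0::real^3) 1)" by (rule compact_sphere)
  have ne0: "sphere (0::real^3) 1 \<noteq> {}" using norm_axis_1 by force
  obtain u1 where u1S: "u1 \<in> sphere 0 1" and u1max: "\<forall>y\<in>sphere 0 1. qf A y \<le> qf A u1"
    using continuous_attains_sup[OF c0 ne0 qf_cont] by blast
  have n1: "u1 \<bullet> u1 = 1" using u1S by (simp add: dot_square_norm)
  have P1: "w \<bullet> (A *v u1) = 0" if "w \<bullet> u1 = 0" for w
  proof (rule max_on[OF sym, of UNIV])
    show "\<forall>y\<in>UNIV. y \<bullet> y = 1 \<longrightarrow> qf A y \<le> qf A u1" using u1max by (simp add: norm_eq_1)
  qed (use n1 that in auto)
  define S1 where "S1 = {x::real^3. u1 \<bullet> x = 0}"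
  define T where "T = sphere (0::real^3) 1 \<inter> S1"
  have cT: "compact T" unfolding T_def S1_def by (intro compact_Int_closed c0 closed_hyperplane)
  obtain v where v: "v \<bullet> v = 1" "v \<bullet> u1 = 0" using perp_exists[OF n1] by blast
  have "v \<in> T" unfolding T_def S1_def using v by (simp add: inner_commute norm_eq_1)
  then have neT: "T \<noteq> {}" by blast
  obtain u2 where u2T: "u2 \<in> T" and u2max: "\<forall>y\<in>T. qf A y \<le> qf A u2"
    using continuous_attains_sup[OF cT neT qf_cont] by blast
  have n2: "u2 \<bullet> u2 = 1" and o21: "u2 \<bullet> u1 = 0"
    using u2T unfolding T_def S1_def by (auto simp: dot_square_norm inner_commute)
  have P2: "w \<bullet> (A *v u2) = 0" if "w \<bullet> u1 = 0" "w \<bullet> u2 = 0" for w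
  proof (rule max_on[OF sym, of S1])
    show "\<forall>y\<in>S1. y \<bullet> y = 1 \<longrightarrow> qf A y \<le> qf A u2" using u2max unfolding T_def
      by (simp add: norm_eq_1)
  qed (use n2 o21 that in \<open>auto simp: S1_def inner_add_right inner_commute\<close>)
  define u3 where "u3 = cross3 u1 u2"
  have o31: "u3 \<bullet> u1 = 0" and o32: "u3 \<bullet> u2 = 0" unfolding u3_def
    by (simp_all add: dot_cross_self inner_commute)
  have n3: "u3 \<bullet> u3 = 1" unfolding u3_def cross_self_norm using n1 n2 o21
    by (simp add: inner_commute)
  define V :: mat3 where "V = vector [u1, u2, u3]"
  have V1: "V$1 = u1" and V2: "V$2 = u2" and V3: "V$3 = u3" unfolding V_def by simp_all
  have VV: "V ** transpose V = mat 1"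
    unfolding vec_eq_iff rows_inner forall_3 V1 V2 V3
    using n1 n2 n3 o21 o31 o32 by (simp add: mat_def inner_commute)
  then have VV2: "transpose V ** V = mat 1" using matrix_left_right_inverse by blast
  have dV: "det V = 1" unfolding V_def u3_def det_rows_cross
    using n3 unfolding u3_def .
  define D where "D = V ** A ** transpose V"
  have off: "D$i$j = 0" if "i \<noteq> j" for i j
  proof -
    have e12: "u1 \<bullet> (A *v u2) = 0" using P1[OF o21] sym_inner[OF sym, of u1 u2] by simp
    have e13: "u1 \<bullet> (A *v u3) = 0" using P1[OF o31] sym_inner[OF sym, of u1 u3] by simp
    have e23: "u2 \<bullet> (A *v u3) = 0" using P2[OF o31 o32] sym_inner[OF sym, of u2 u3] by simp
    have e21: "u2 \<bullet> (A *v u1) = 0" using P1[OF o21] .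
    have e31: "u3 \<bullet> (A *v u1) = 0" using P1[OF o31] .
    have e32: "u3 \<bullet> (A *v u2) = 0" using P2[OF o31 o32] .
    have "\<forall>i j. i \<noteq> j \<longrightarrow> D$i$j = 0" unfolding forall_3 D_def conj_entry V1 V2 V3
      by (simp add: e12 e13 e23 e21 e31 e32)
    then show ?thesis using that by blast
  qed
  have Deq: "D = dg (\<chi> i. D$i$i)" by (rule dg_eqI) (rule off)
  have "transpose V ** D ** V = (transpose V ** V) ** A ** (transpose V ** V)"
    unfolding D_def by (simp add: matrix_mul_assoc)
  then have "A = transpose V ** D ** V" using VV2 by simp
  then have "A = transpose V ** dg (\<chi> i. D$i$i) ** transpose (transpose V)"
    using Deq by simp
  moreover have "transpose V ** transpose (transpose V) = mat 1" using VV2 by simp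
  moreover have "transpose (transpose V) ** transpose V = mat 1" using VV by simp
  moreover have "det (transpose V) = 1" using dV by simp
  ultimately show ?thesis using that by blast
qed



definition pd :: "mat3 \<Rightarrow> bool" where
  "pd A \<longleftrightarrow> (\<forall>x. x \<noteq> 0 \<longrightarrow> 0 < qf A x)"

lemma inner_matvec_tr: "x \<bullet> (R *v y) = (transpose R *v x) \<bullet> (y::real^3)"
  by (simp add: dot_lmul_matrix)

lemma qf_conj: "qf (R ** M ** transpose R) x = qf M (transpose R *v x)"
  unfolding qf_def
  by (simp add: inner_matvec_tr matrix_vector_mul_assoc[symmetric] del: transpose_matrix_vector)

lemma qf_dg: "qf (dg lam) y = lam$1 * (y$1)^2 + lam$2 * (y$2)^2 + lam$3 * (y$3)^2"
  by (simp add: qf_def bf power2_eq_square algebra_simps)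

lemma axis_neq0: "axis i (1::real) \<noteq> 0"
  by (metis axis_nth zero_index zero_neq_one)

lemma pd_spec:
  fixes R :: mat3
  assumes RR: "transpose R ** R = mat 1"
  shows "pd (R ** dg lam ** transpose R) \<longleftrightarrow> (\<forall>i. lam$i > 0)"
proof
  assume p: "pd (R ** dg lam ** transpose R)"
  show "\<forall>i. lam$i > 0"
  proof
    fix i :: 3
    define x where "x = R *v axis i 1"
    have tx: "transpose R *v x = axis i 1" unfolding x_def matrix_vector_mul_assoc RR by simp
    have "x \<noteq> 0" using tx axis_neq0 by force
    then have "0 < qf (R ** dg lam ** transpose R) x" using p unfolding pd_def by blast
    also have "\<dots> = lam$i"
    proof -
      have "\<forall>i. qf (dg lam) (axis i 1) = lam$i" unfolding forall_3 by (simp add: qf_dg axis_def)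
      then show ?thesis unfolding qf_conj tx by blast
    qed
    finally show "lam$i > 0" .
  qed
next
  assume l: "\<forall>i. lam$i > 0"
  show "pd (R ** dg lam ** transpose R)" unfolding pd_def
  proof (intro allI impI)
    fix x :: "real^3" assume x: "x \<noteq> 0"
    define y where "y = transpose R *v x"
    have RR2: "R ** transpose R = mat 1" using RR matrix_left_right_inverse by blast
    have "R *v y = x" unfolding y_def matrix_vector_mul_assoc RR2 by simp
    then have "y \<noteq> 0" using x by auto
    then have "y$1 \<noteq> 0 \<or> y$2 \<noteq> 0 \<or> y$3 \<noteq> 0" by (auto simp: vec_eq_iff forall_3)
    moreover have "lam$1 > 0" "lam$2 > 0" "lam$3 > 0" using l by auto
    moreover have "lam$k * (y$k)^2 \<ge> 0" if "lam$k > 0" for k using that by simp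
    moreover have "lam$k * (y$k)^2 > 0" if "lam$k > 0" "y$k \<noteq> 0" for k using that by simp
    ultimately have "0 < lam$1 * (y$1)^2 + lam$2 * (y$2)^2 + lam$3 * (y$3)^2"
      by (smt (verit))
    then show "0 < qf (R ** dg lam ** transpose R) x" unfolding qf_conj qf_dg y_def .
  qed
qed

lemma det_dg: "det (dg lam) = lam$1 * lam$2 * lam$3"
  by (simp add: bf)

lemma det_spec: fixes R :: mat3 assumes "det R = 1" shows "det (R ** dg lam ** transpose R) = lam$1 * lam$2 * lam$3"
  using assms by (simp add: det_mul det_dg)

lemma dg_mul: "dg a ** dg b = dg (\<chi> i. a$i * b$i)"
  by (simp add: bf)

lemma pd_det_pos: assumes "transpose A = A" "pd A" shows "det A > 0"
proof -
  obtain R lam where R: "R ** transpose R = mat 1" "transpose R ** R = mat 1" "det R = 1"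
    "A = R ** dg lam ** transpose R" using spectral3[OF assms(1)] by blast
  have "\<forall>i. lam$i > 0" using pd_spec[OF R(2)] assms(2) R(4) by simp
  then show ?thesis unfolding R(4) det_spec[OF R(3)] by simp
qed

lemma pd_sqrt: assumes "transpose A = A" "pd A"
  obtains B where "transpose B = B" "pd B" "B ** B = A"
proof -
  obtain R lam where R: "R ** transpose R = mat 1" "transpose R ** R = mat 1" "det R = 1"
    "A = R ** dg lam ** transpose R" using spectral3[OF assms(1)] by blast
  have lp: "\<forall>i. lam$i > 0" using pd_spec[OF R(2)] assms(2) R(4) by simp
  define s where "s = (\<chi> i. sqrt (lam$i))"
  define B where "B = R ** dg s ** transpose R"
  have "transpose B = B" unfolding B_def by (simp add: matrix_transpose_mul matrix_mul_assoc bf)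
  moreover have "pd B" unfolding B_def pd_spec[OF R(2)] s_def using lp by simp
  moreover have "B ** B = A"
  proof -
    have "B ** B = R ** (dg s ** (transpose R ** R) ** dg s) ** transpose R"
      unfolding B_def by (simp add: matrix_mul_assoc)
    also have "\<dots> = R ** dg lam ** transpose R"
    proof -
      have "(\<chi> i. s$i * s$i) = lam" unfolding s_def using lp by (simp add: vec_eq_iff less_imp_le)
      then show ?thesis unfolding R(2) matrix_mul_rid dg_mul by simp
    qed
    finally show ?thesis using R(4) by simp
  qed
  ultimately show ?thesis using that by blast
qed

lemma sign_lemma:
  fixes x y z :: real
  assumes "x * y * z > 0" "\<not> (x > 0 \<and> y > 0 \<and> z > 0)"
  shows "x + y + z < 0 \<or> x*y + x*z + y*z < 0"
proof (rule ccontr)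
  assume "\<not> ?thesis"
  then have s1: "x + y + z \<ge> 0" and s2: "x*y + x*z + y*z \<ge> 0" by auto
  have "x \<le> 0 \<or> y \<le> 0 \<or> z \<le> 0" using assms(2) by auto
  then obtain r where r: "r \<in> {x, y, z}" "r \<le> 0" by blast
  have "r \<noteq> 0" using r assms(1) by auto
  then have rn: "r < 0" using r by simp
  have "(r - x) * (r - y) * (r - z) = 0" using r by auto
  then have eq: "r^3 - (x+y+z) * r^2 + (x*y + x*z + y*z) * r - x*y*z = 0"
    by (simp add: algebra_simps power2_eq_square power3_eq_cube)
  have "r * r > 0" using rn by (simp add: mult_neg_neg)
  then have "(r * r) * r < 0" using rn by (simp add: mult_pos_neg)
  then have "r^3 < 0" by (simp add: power3_eq_cube)
  moreover have "(x+y+z) * r^2 \<ge> 0" using s1 by simp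
  moreover have "(x*y + x*z + y*z) * r \<le> 0" using s2 rn by (simp add: mult_nonneg_nonpos)
  ultimately show False using eq assms(1) by linarith
qed

definition e2 :: "mat3 \<Rightarrow> real" where
  "e2 A = A$1$1 * A$2$2 - A$1$2 * A$2$1 + A$1$1 * A$3$3 - A$1$3 * A$3$1 + A$2$2 * A$3$3 - A$2$3 * A$3$2"

lemma e2_trace: "e2 A = ((trace A)^2 - trace (A ** A)) / 2"
  by (simp add: e2_def trace_def bf power2_eq_square algebra_simps)

lemma trace_conj: fixes R M :: mat3 assumes "transpose R ** R = mat 1"
  shows "trace (R ** M ** transpose R) = trace M"
proof -
  have "trace ((R ** M) ** transpose R) = trace (transpose R ** (R ** M))" using trace_mul_sym[of "R ** M" "transpose R"] .
  also have "\<dots> = trace ((transpose R ** R) ** M)" by (simp add: matrix_mul_assoc)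
  finally show ?thesis using assms by simp
qed

lemma e2_spec: fixes R :: mat3 assumes RR: "transpose R ** R = mat 1"
  shows "e2 (R ** dg lam ** transpose R) = lam$1*lam$2 + lam$1*lam$3 + lam$2*lam$3"
proof -
  have sq: "(R ** dg lam ** transpose R) ** (R ** dg lam ** transpose R) = R ** (dg lam ** dg lam) ** transpose R"
    using RR by (simp add: matrix_mul_assoc) (metis matrix_mul_assoc matrix_mul_rid)
  show ?thesis unfolding e2_trace sq trace_conj[OF RR]
    by (simp add: trace_def bf power2_eq_square algebra_simps)
qed

lemma trace_spec: fixes R :: mat3 assumes RR: "transpose R ** R = mat 1"
  shows "trace (R ** dg lam ** transpose R) = lam$1 + lam$2 + lam$3"
  unfolding trace_conj[OF RR] by (simp add: trace_def bf)

lemma sym_sign: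
  assumes "transpose A = A" "det A > 0"
  shows "pd A \<Longrightarrow> trace A > 0 \<and> e2 A > 0"
    and "\<not> pd A \<Longrightarrow> trace A < 0 \<or> e2 A < 0"
proof -
  obtain R lam where R: "R ** transpose R = mat 1" "transpose R ** R = mat 1" "det R = 1"
    "A = R ** dg lam ** transpose R" using spectral3[OF assms(1)] by blast
  have tr: "trace A = lam$1 + lam$2 + lam$3" using trace_spec[OF R(2)] R(4) by simp
  have ee: "e2 A = lam$1*lam$2 + lam$1*lam$3 + lam$2*lam$3" using e2_spec[OF R(2)] R(4) by simp
  have dd: "lam$1 * lam$2 * lam$3 > 0" using det_spec[OF R(3)] R(4) assms(2) by simp
  show "pd A \<Longrightarrow> trace A > 0 \<and> e2 A > 0"
  proof -
    assume "pd A"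
    then have "\<forall>i. lam$i > 0" using pd_spec[OF R(2)] R(4) by simp
    then have "lam$1 > 0" "lam$2 > 0" "lam$3 > 0" by auto
    then show ?thesis unfolding tr ee by (simp add: add_pos_pos)
  qed
  show "\<not> pd A \<Longrightarrow> trace A < 0 \<or> e2 A < 0"
  proof -
    assume "\<not> pd A"
    then have "\<not> (\<forall>i. lam$i > 0)" using pd_spec[OF R(2)] R(4) by simp
    then have "\<not> (lam$1 > 0 \<and> lam$2 > 0 \<and> lam$3 > 0)" by (auto simp: forall_3)
    from sign_lemma[OF dd this] show ?thesis unfolding tr ee .
  qed
qed



lemma neg_spectral:
  fixes A :: mat3
  assumes sym: "transpose A = A" and dA: "det A > 0" and np: "\<not> pd A"
  obtains R lam k where "R ** transpose R = mat 1" "transpose R ** R = mat 1" "det R = 1"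
    "A = R ** dg lam ** transpose R" "lam$k > 0" "\<forall>i. i \<noteq> k \<longrightarrow> lam$i < 0"
proof -
  obtain R lam where R: "R ** transpose R = mat 1" "transpose R ** R = mat 1" "det R = 1"
    "A = R ** dg lam ** transpose R" using spectral3[OF sym] by blast
  have dd: "lam$1 * lam$2 * lam$3 > 0" using det_spec[OF R(3)] R(4) dA by simp
  have "\<not> (\<forall>i. lam$i > 0)" using pd_spec[OF R(2)] R(4) np by simp
  then have na: "\<not> (lam$1 > 0 \<and> lam$2 > 0 \<and> lam$3 > 0)" by (auto simp: forall_3)
  have "\<exists>k. lam$k > 0 \<and> (\<forall>i. i \<noteq> k \<longrightarrow> lam$i < 0)"
  proof (cases "lam$1 > 0")
    case True
    have "lam$1 * (lam$2 * lam$3) > 0" using dd by (simp add: mult.assoc)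
    then have "lam$2 * lam$3 > 0" using True zero_less_mult_pos by blast
    then have "lam$2 < 0 \<and> lam$3 < 0" using na True by (auto simp: zero_less_mult_iff)
    then show ?thesis using True by (intro exI[of _ 1]) (auto simp: forall_3)
  next
    case False
    then have l1: "lam$1 < 0" using dd by (cases "lam$1 = 0") auto
    then have "lam$2 * lam$3 < 0" using dd
      by (metis mult.assoc mult_neg_neg mult_neg_pos not_less_iff_gr_or_eq zero_less_mult_iff)
    then have "(lam$2 > 0 \<and> lam$3 < 0) \<or> (lam$2 < 0 \<and> lam$3 > 0)" by (auto simp: mult_less_0_iff)
    then show ?thesis
    proof
      assume "lam$2 > 0 \<and> lam$3 < 0"
      then show ?thesis using l1 by (intro exI[of _ 2]) (auto simp: forall_3)
    next
      assume "lam$2 < 0 \<and> lam$3 > 0"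
      then show ?thesis using l1 by (intro exI[of _ 3]) (auto simp: forall_3)
    qed
  qed
  then show ?thesis using that R by blast
qed

lemma outer_mat: "outer (R *v a) (R *v b) = R ** outer a b ** transpose R"
  by (simp add: bf algebra_simps)

lemma outer_axis: "2 *\<^sub>R outer (axis k 1) (axis k 1) - mat 1 = dg (\<chi> i. if i = k then 1 else -1)"
  by (auto simp: vec_eq_iff outer_def dg_def mat_def axis_def)

lemma conj_refl: fixes R X :: mat3 shows "R ** (2 *\<^sub>R X - mat 1) ** transpose R = 2 *\<^sub>R (R ** X ** transpose R) - R ** transpose R"
  by (simp add: bf algebra_simps)

lemma refl_conj: assumes "R ** transpose R = mat 1"
  shows "2 *\<^sub>R outer (R *v a) (R *v a) - mat 1 = R ** (2 *\<^sub>R outer a a - mat 1) ** transpose R"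
  unfolding conj_refl outer_mat assms ..

lemma neg_form:
  fixes A :: mat3
  assumes sym: "transpose A = A" and dA: "det A > 0" and np: "\<not> pd A"
  obtains M u where "transpose M = M" "pd M" "u \<bullet> u = 1" "A = M ** (2 *\<^sub>R outer u u - mat 1) ** M"
proof -
  obtain R lam k where R: "R ** transpose R = mat 1" "transpose R ** R = mat 1" "det R = 1"
    "A = R ** dg lam ** transpose R" and lk: "lam$k > 0" and li: "\<forall>i. i \<noteq> k \<longrightarrow> lam$i < 0"
    using neg_spectral[OF assms] by blast
  define s where "s = (\<chi> i. sqrt \<bar>lam$i\<bar>)"
  define sg :: "real^3" where "sg = (\<chi> i. if i = k then 1 else -1)"
  define M where "M = R ** dg s ** transpose R"
  define u where "u = R *v axis k 1"
  have nz: "lam$i \<noteq> 0" for i using lk li by (cases "i = k") auto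
  have "transpose M = M" unfolding M_def by (simp add: matrix_transpose_mul matrix_mul_assoc bf)
  moreover have "pd M" unfolding M_def pd_spec[OF R(2)] s_def using nz by simp
  moreover have "u \<bullet> u = 1"
  proof -
    have "u \<bullet> u = (transpose R *v u) \<bullet> axis k 1" unfolding u_def inner_matvec_tr ..
    also have "\<dots> = 1" unfolding u_def matrix_vector_mul_assoc R(2) by simp
    finally show ?thesis .
  qed
  moreover have "A = M ** (2 *\<^sub>R outer u u - mat 1) ** M"
  proof -
    have "2 *\<^sub>R outer u u - mat 1 = R ** dg sg ** transpose R"
      unfolding u_def refl_conj[OF R(1)] outer_axis sg_def ..
    then have "M ** (2 *\<^sub>R outer u u - mat 1) ** M
        = R ** (dg s ** (transpose R ** R) ** dg sg ** (transpose R ** R) ** dg s) ** transpose R"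
      unfolding M_def by (simp add: matrix_mul_assoc)
    also have "\<dots> = R ** dg (\<chi> i. s$i * sg$i * s$i) ** transpose R"
      unfolding R(2) matrix_mul_rid dg_mul by (simp add: mult.assoc)
    also have "(\<chi> i. s$i * sg$i * s$i) = lam"
    proof -
      have "s$i * sg$i * s$i = lam$i" for i
        using lk li[rule_format, of i] unfolding s_def sg_def
        by (cases "i = k") (auto simp: abs_if)
      then show ?thesis by (simp add: vec_eq_iff)
    qed
    finally show ?thesis using R(4) by simp
  qed
  ultimately show ?thesis using that by blast
qed

lemma det_refl: "det (2 *\<^sub>R outer u u - mat 1) = 2 * (u \<bullet> u) - 1"
  by (simp add: bf algebra_simps)

lemma mJ_axis: "- J21 = 2 *\<^sub>R outer (axis 3 1) (axis 3 1) - mat 1"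
  by (auto simp: vec_eq_iff J21_def outer_def mat_def axis_def forall_3)

lemma unit_refl:
  fixes u :: "real^3" assumes "u \<bullet> u = 1"
  obtains Q where "Q ** transpose Q = mat 1" "transpose Q ** Q = mat 1" "det Q = 1"
    "2 *\<^sub>R outer u u - mat 1 = Q ** (- J21) ** transpose Q"
proof -
  have "norm u = 1" using assms by (simp add: norm_eq_1)
  then obtain Q where Q: "rotation_matrix Q" "Q *v axis 3 1 = u"
    using rotation_matrix_exists_basis[of u] by auto
  have QQ: "Q ** transpose Q = mat 1" "transpose Q ** Q = mat 1" "det Q = 1"
    using Q(1) unfolding rotation_matrix_def orthogonal_matrix_def by auto
  have "2 *\<^sub>R outer u u - mat 1 = Q ** (- J21) ** transpose Q"
    unfolding mJ_axis Q(2)[symmetric] refl_conj[OF QQ(1)] ..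
  then show ?thesis using QQ that by blast
qed

lemma det_pos_sq: fixes M :: mat3 assumes "det M > 0" "det M * det M = 1" shows "det M = 1"
  using assms by (metis mult_cancel_left1 mult_le_cancel_left1 nle_le not_less_iff_gr_or_eq
      mult_less_cancel_left_pos mult.right_neutral)



definition Sym1 :: "mat3 set" where "Sym1 = {A \<in> SL3. transpose A = A}"
definition Pos1 :: "mat3 set" where "Pos1 = {A \<in> Sym1. pd A}"
definition Neg1 :: "mat3 set" where "Neg1 = {A \<in> Sym1. \<not> pd A}"

lemma mm_add_r: "((A::mat3) + B) ** C = A ** C + B ** C"
  by (simp add: bf algebra_simps)
lemma mm_diff_l: "(A::mat3) ** (B - C) = A ** B - A ** C"
  by (simp add: bf algebra_simps)
lemma mm_diff_r: "((A::mat3) - B) ** C = A ** C - B ** C"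
  by (simp add: bf algebra_simps)
lemma mm_zero_l: "(0::mat3) ** A = 0"
  by (simp add: bf)
lemma qf_add: "qf ((A::mat3) + B) x = qf A x + qf B x"
  by (simp add: qf_def bf algebra_simps)

lemma pd_add: assumes "pd A" "pd B" shows "pd (A + B)"
  unfolding pd_def qf_add
proof (intro allI impI)
  fix x :: "real^3" assume "x \<noteq> 0"
  then have "0 < qf A x" "0 < qf B x" using assms unfolding pd_def by auto
  then show "0 < qf A x + qf B x" by simp
qed

lemma transpose_add3: "transpose ((A::mat3) + B) = transpose A + transpose B"
  by (simp add: bf)

lemma sym_add: "transpose (A::mat3) = A \<Longrightarrow> transpose B = B \<Longrightarrow> transpose (A + B) = A + B"
  by (simp only: transpose_add3)

lemma pd_fix:
  fixes A P :: mat3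
  assumes sA: "transpose A = A" "pd A" and sP: "transpose P = P" "pd P"
    and eq: "A ** matrix_inv P ** A = P"
  shows "A = P"
proof -
  have dP: "det P \<noteq> 0" using pd_det_pos[OF sP] by simp
  define Z where "Z = matrix_inv P ** A"
  have ZZ: "Z ** Z = mat 1"
  proof -
    have "Z ** Z = matrix_inv P ** (A ** matrix_inv P ** A)" unfolding Z_def by (simp add: matrix_mul_assoc)
    then show ?thesis unfolding eq using inv3(2)[OF dP] by simp
  qed
  define W where "W = matrix_inv P ** (A + P)"
  have ZW: "Z + mat 1 = W" unfolding W_def Z_def matrix_add_ldistrib inv3(2)[OF dP] ..
  have dW: "det W \<noteq> 0"
  proof -
    have "det (A + P) > 0" using pd_det_pos[OF sym_add[OF sA(1) sP(1)] pd_add[OF sA(2) sP(2)]] .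
    then show ?thesis unfolding W_def det_mul using det_inv3[OF dP] dP by simp
  qed
  have "(Z - mat 1) ** (Z + mat 1) = 0"
    unfolding mm_diff_r matrix_add_ldistrib ZZ by simp
  then have "(Z - mat 1) ** W ** matrix_inv W = 0" unfolding ZW by (simp add: mm_zero_l)
  then have "Z - mat 1 = 0" using inv3(1)[OF dW] by (simp add: matrix_mul_assoc[symmetric])
  then have "matrix_inv P ** A = mat 1" unfolding Z_def by simp
  then have "P ** (matrix_inv P ** A) = P" by simp
  then show ?thesis using inv3(1)[OF dP] by (simp add: matrix_mul_assoc)
qed

lemma mstar_gram: fixes M :: mat3 assumes "det M \<noteq> 0"
  shows "mstar M ** transpose (mstar M) = matrix_inv (M ** transpose M)"
proof -
  have "det (transpose M) \<noteq> 0" using assms by simp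
  then show ?thesis using assms
    by (simp add: mstar_def inv_mul3 inv_transpose3)
qed

lemma gram_pd: fixes M :: mat3 assumes "det M \<noteq> 0"
  shows "pd (M ** transpose M)" "transpose (M ** transpose M) = M ** transpose M"
proof -
  show "transpose (M ** transpose M) = M ** transpose M" by (simp add: matrix_transpose_mul)
  show "pd (M ** transpose M)" unfolding pd_def qf_def
  proof (intro allI impI)
    fix x :: "real^3" assume x: "x \<noteq> 0"
    have dt: "det (transpose M) \<noteq> 0" using assms by simp
    have "transpose M *v x \<noteq> 0"
    proof
      assume "transpose M *v x = 0"
      then have "matrix_inv (transpose M) *v (transpose M *v x) = 0"
        by (simp del: transpose_matrix_vector)
      then have "(matrix_inv (transpose M) ** transpose M) *v x = 0"
        by (simp add: matrix_vector_mul_assoc del: transpose_matrix_vector)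
      then show False using x inv3(2)[OF dt] by simp
    qed
    then have "0 < (transpose M *v x) \<bullet> (transpose M *v x)" by simp
    also have "\<dots> = x \<bullet> ((M ** transpose M) *v x)"
      by (simp add: inner_matvec_tr matrix_vector_mul_assoc[symmetric] del: transpose_matrix_vector)
    finally show "0 < x \<bullet> ((M ** transpose M) *v x)" .
  qed
qed

lemma sqrt_SL3:
  assumes "A \<in> Pos1" obtains B where "B \<in> SL3" "transpose B = B" "pd B" "A = B ** transpose B"
proof -
  have sA: "transpose A = A" "pd A" "det A = 1" using assms unfolding Pos1_def Sym1_def SL3_def by auto
  obtain B where B: "transpose B = B" "pd B" "B ** B = A" using pd_sqrt[OF sA(1,2)] by blast
  have "det B > 0" using pd_det_pos[OF B(1,2)] .
  moreover have "det B * det B = 1" using sA(3) B(3) det_mul[of B B] by simp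
  ultimately have "det B = 1" by (rule det_pos_sq)
  then have "B \<in> SL3" unfolding SL3_def by simp
  then show ?thesis using that B by simp
qed

lemma orev_invol: assumes "A \<in> Sym1" "x \<in> Xsp" shows "orev A (orev A x) = x"
proof -
  have AS: "A \<in> SL3" "transpose A = A" using assms(1) unfolding Sym1_def by auto
  have dA: "det A \<noteq> 0" using AS unfolding SL3_def by simp
  obtain M where M: "M \<in> SL3" "x = cls M" using assms(2) unfolding Xsp_def by blast
  have dM: "det M \<noteq> 0" using M unfolding SL3_def by simp
  have AM: "A ** mstar M \<in> SL3" using SL3_mul[OF AS(1) SL3_mstar[OF M(1)]] .
  have "orev A (orev A x) = cls (A ** mstar (A ** mstar M))"
    unfolding M(2) orev_cls[OF M(1)] orev_cls[OF AM] ..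
  also have "mstar (A ** mstar M) = mstar A ** M"
    using mstar_mul[OF dA] det_mstar[OF dM] dM mstar_mstar[OF dM] by simp
  also have "mstar A = matrix_inv A" unfolding mstar_def
    using inv_transpose3[OF dA] AS(2) by simp
  finally show ?thesis using inv3(1)[OF dA] M(2) by (simp add: matrix_mul_assoc)
qed

definition Eij :: "3 \<Rightarrow> 3 \<Rightarrow> mat3" where "Eij a b = (\<chi> i j. if i = a \<and> j = b then 1 else 0)"
definition Up :: "3 \<Rightarrow> 3 \<Rightarrow> mat3" where "Up a b = mat 1 + Eij a b"
definition Um :: "3 \<Rightarrow> 3 \<Rightarrow> mat3" where "Um a b = mat 1 - Eij a b"
definition D412 :: mat3 where "D412 = dg (vector [2, 1, 1/2])"

lemma Up_SL3: "Up 1 2 \<in> SL3" "Up 1 3 \<in> SL3" "Up 2 3 \<in> SL3"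
  by (simp_all add: SL3_def Up_def Eij_def bf)
lemma Um_SL3: "Um 1 2 \<in> SL3" "Um 1 3 \<in> SL3" "Um 2 3 \<in> SL3"
  by (simp_all add: SL3_def Um_def Eij_def bf)
lemma D412_SL3: "D412 \<in> SL3"
  by (simp add: SL3_def D412_def bf)
lemma I_SL3: "mat 1 \<in> SL3" by (simp add: SL3_def)

lemma central_I:
  fixes C :: mat3
  assumes dC: "det C = 1" and h: "\<And>M. M \<in> SL3 \<Longrightarrow> C ** M ** transpose (C ** M) = M ** transpose M"
  shows "C = mat 1"
proof -
  have a: "C ** transpose C = mat 1" using h[OF I_SL3] by simp
  then have a2: "transpose C ** C = mat 1" using matrix_left_right_inverse by blast
  define P where "P = D412 ** transpose D412"
  have b: "C ** P ** transpose C = P" using h[OF D412_SL3] unfolding P_def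
    by (simp add: matrix_transpose_mul matrix_mul_assoc)
  have "C ** P = C ** P ** (transpose C ** C)" using a2 by simp
  also have "\<dots> = P ** C" using b by (simp add: matrix_mul_assoc)
  finally have cp: "C ** P = P ** C" .
  have off: "C$1$2 = 0 \<and> C$1$3 = 0 \<and> C$2$1 = 0 \<and> C$2$3 = 0 \<and> C$3$1 = 0 \<and> C$3$2 = 0"
    using cp unfolding P_def D412_def by (simp add: bf)
  have c12: "C$1$1 * C$2$2 = 1" using h[OF Up_SL3(1)] off
    unfolding vec_eq_iff by (simp add: Up_def Eij_def bf)
  have c23: "C$2$2 * C$3$3 = 1" using h[OF Up_SL3(3)] off
    unfolding vec_eq_iff by (simp add: Up_def Eij_def bf)
  have c123: "C$1$1 * C$2$2 * C$3$3 = 1" using dC off by (simp add: det_3)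
  have "C$3$3 = 1" using c123 c12 by simp
  then have "C$2$2 = 1" using c23 by simp
  then have "C$1$1 = 1" using c12 by simp
  then show ?thesis using off \<open>C$2$2 = 1\<close> \<open>C$3$3 = 1\<close>
    by (simp add: vec_eq_iff forall_3 mat_def)
qed

lemma invol_sym:
  assumes A: "A \<in> SL3" and inv: "\<forall>x\<in>Xsp. orev A (orev A x) = x"
  shows "transpose A = A"
proof -
  have dA: "det A \<noteq> 0" using A unfolding SL3_def by simp
  define C where "C = A ** mstar A"
  have dC: "det C = 1" unfolding C_def using A dA by (simp add: det_mul det_mstar SL3_def)
  have "C ** M ** transpose (C ** M) = M ** transpose M" if M: "M \<in> SL3" for M
  proof -
    have dM: "det M \<noteq> 0" using M unfolding SL3_def by simp
    have AM: "A ** mstar M \<in> SL3" using SL3_mul[OF A SL3_mstar[OF M]] .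
    have "cls M = orev A (orev A (cls M))" using inv cls_Xsp[OF M] by simp
    also have "\<dots> = cls (A ** mstar (A ** mstar M))"
      unfolding orev_cls[OF M] orev_cls[OF AM] ..
    also have "mstar (A ** mstar M) = mstar A ** M"
      using mstar_mul[OF dA] det_mstar[OF dM] dM mstar_mstar[OF dM] by simp
    finally have "cls M = cls (C ** M)" unfolding C_def by (simp add: matrix_mul_assoc)
    moreover have "det M = det (C ** M)" using dC by (simp add: det_mul)
    ultimately show ?thesis using cls_eq_gram dM by metis
  qed
  then have "C = mat 1" by (rule central_I[OF dC])
  then have "matrix_inv A = mstar A" unfolding C_def by (rule inv_unique)
  then have "matrix_inv A = matrix_inv (transpose A)" unfolding mstar_def inv_transpose3[OF dA] by simp
  then have "matrix_inv (matrix_inv A) = matrix_inv (matrix_inv (transpose A))" by simp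
  then show ?thesis using dA by (simp add: inv_inv3)
qed

lemma InvolRev_eq: "InvolRev = orev ` Sym1"
proof
  show "InvolRev \<subseteq> orev ` Sym1"
  proof
    fix \<phi> assume "\<phi> \<in> InvolRev"
    then obtain A where A: "A \<in> SL3" "\<phi> = orev A" "\<forall>x\<in>Xsp. \<phi> (\<phi> x) = x"
      unfolding InvolRev_def orevX_def by blast
    then have "transpose A = A" using invol_sym by simp
    then show "\<phi> \<in> orev ` Sym1" using A unfolding Sym1_def by blast
  qed
  show "orev ` Sym1 \<subseteq> InvolRev"
  proof
    fix \<phi> assume "\<phi> \<in> orev ` Sym1"
    then obtain A where A: "A \<in> Sym1" "\<phi> = orev A" by blast
    then have "A \<in> SL3" unfolding Sym1_def by simp
    then show "\<phi> \<in> InvolRev" unfolding InvolRev_def orevX_def using A orev_invol by blast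
  qed
qed

lemma Sym1_split: "Sym1 = Pos1 \<union> Neg1" unfolding Pos1_def Neg1_def by auto

lemma inversions_eq: "inversion ` Xsp = orev ` Pos1"
proof
  show "inversion ` Xsp \<subseteq> orev ` Pos1"
  proof
    fix \<phi> assume "\<phi> \<in> inversion ` Xsp"
    then obtain M where M: "M \<in> SL3" "\<phi> = inversion (cls M)" unfolding Xsp_def by blast
    have dM: "det M \<noteq> 0" using M unfolding SL3_def by simp
    have "M ** transpose M \<in> Pos1" unfolding Pos1_def Sym1_def using gram_pd[OF dM] M(1)
      by (simp add: SL3_def det_mul)
    then show "\<phi> \<in> orev ` Pos1" unfolding M(2) inversion_cls by blast
  qed
  show "orev ` Pos1 \<subseteq> inversion ` Xsp"
  proof
    fix \<phi> assume "\<phi> \<in> orev ` Pos1"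
    then obtain A where A: "A \<in> Pos1" "\<phi> = orev A" by blast
    obtain B where B: "B \<in> SL3" "A = B ** transpose B" using sqrt_SL3[OF A(1)] by blast
    show "\<phi> \<in> inversion ` Xsp" unfolding A(2) B(2) inversion_cls[symmetric]
      using cls_Xsp[OF B(1)] by blast
  qed
qed



lemma cls_cancel:
  assumes A: "A \<in> SL3" and X: "X \<in> SL3" and Y: "Y \<in> SL3" and eq: "cls (A ** X) = cls (A ** Y)"
  shows "cls X = cls Y"
proof -
  have dA: "det A \<noteq> 0" "det X = 1" "det Y = 1" using A X Y unfolding SL3_def by auto
  have "(A ** X) ** transpose (A ** X) = (A ** Y) ** transpose (A ** Y)"
    using eq cls_eq_gram[of "A ** X" "A ** Y"] dA by (simp add: det_mul)
  then have "A ** (X ** transpose X) ** transpose A = A ** (Y ** transpose Y) ** transpose A"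
    by (simp add: matrix_transpose_mul matrix_mul_assoc)
  then have "matrix_inv A ** (A ** (X ** transpose X) ** transpose A) ** mstar A
           = matrix_inv A ** (A ** (Y ** transpose Y) ** transpose A) ** mstar A" by simp
  moreover have "matrix_inv A ** (A ** G ** transpose A) ** mstar A = G" for G
  proof -
    have "matrix_inv A ** (A ** G ** transpose A) ** mstar A
        = (matrix_inv A ** A) ** G ** (transpose A ** mstar A)" by (simp add: matrix_mul_assoc)
    then show ?thesis using inv3(2)[OF dA(1)] mstar_tr1[OF dA(1)] by simp
  qed
  ultimately have "X ** transpose X = Y ** transpose Y" by simp
  then show ?thesis using cls_eq_gram[of X Y] dA by simp
qed

lemma orev_inj: assumes "A \<in> SL3" "x \<in> Xsp" "y \<in> Xsp" "orev A x = orev A y" shows "x = y"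
proof -
  obtain M where M: "M \<in> SL3" "x = cls M" using assms(2) unfolding Xsp_def by blast
  obtain N where N: "N \<in> SL3" "y = cls N" using assms(3) unfolding Xsp_def by blast
  have dM: "det M = 1" "det N = 1" using M N unfolding SL3_def by auto
  have "cls (mstar M) = cls (mstar N)"
    using cls_cancel[OF assms(1) SL3_mstar[OF M(1)] SL3_mstar[OF N(1)]] assms(4)
    unfolding M(2) N(2) orev_cls[OF M(1)] orev_cls[OF N(1)] by simp
  then have "mstar M ** transpose (mstar M) = mstar N ** transpose (mstar N)"
    using cls_eq_gram[of "mstar M" "mstar N"] dM by (simp add: det_mstar)
  then have "matrix_inv (M ** transpose M) = matrix_inv (N ** transpose N)"
    using mstar_gram dM by simp
  then have "matrix_inv (matrix_inv (M ** transpose M)) = matrix_inv (matrix_inv (N ** transpose N))"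
    by simp
  then have "M ** transpose M = N ** transpose N" using dM by (simp add: inv_inv3 det_mul)
  then show ?thesis unfolding M(2) N(2) using cls_eq_gram[of M N] dM by simp
qed

lemma lmap_inj: assumes "A \<in> SL3" "x \<in> Xsp" "y \<in> Xsp" "lmap A x = lmap A y" shows "x = y"
proof -
  obtain M where M: "M \<in> SL3" "x = cls M" using assms(2) unfolding Xsp_def by blast
  obtain N where N: "N \<in> SL3" "y = cls N" using assms(3) unfolding Xsp_def by blast
  show ?thesis using cls_cancel[OF assms(1) M(1) N(1)] assms(4)
    unfolding M(2) N(2) lmap_cls[OF M(1)] lmap_cls[OF N(1)] by simp
qed

lemma isomX_inj: "g \<in> isomX \<Longrightarrow> inj_on g Xsp"
  unfolding isomX_def inj_on_def using orev_inj lmap_inj by blast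

definition Lb :: mat3 where
  "Lb = (\<chi> i j. if i = 2 \<or> j = 2 then (if i = j then 1 else 0) else (if i = j then 5/4 else 3/4))"

lemma Lb_SO21: "Lb \<in> SO21"
  unfolding SO21_def by (simp add: Lb_def J21_def bf)

lemma I_SO21: "mat 1 \<in> SO21"
  unfolding SO21_def by simp

lemma SO21_SL3: "L \<in> SO21 \<Longrightarrow> L \<in> SL3" unfolding SO21_def SL3_def by simp

lemma H2std_two: "cls (mat 1) \<in> H2std" "cls Lb \<in> H2std" "cls (mat 1) \<noteq> cls Lb"
proof -
  show "cls (mat 1) \<in> H2std" "cls Lb \<in> H2std" unfolding H2std_def using I_SO21 Lb_SO21 by auto
  have "Lb ** transpose Lb \<noteq> mat 1 ** transpose (mat 1)"
    by (simp add: Lb_def bf)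
  moreover have "det Lb = 1" using Lb_SO21 unfolding SO21_def by simp
  ultimately show "cls (mat 1) \<noteq> cls Lb" using cls_eq_gram[of "mat 1" Lb] by simp
qed

lemma H2std_Xsp: "H2std \<subseteq> Xsp"
  unfolding H2std_def Xsp_def using SO21_SL3 by blast

lemma type2_not_single: assumes "type2_plane P" shows "\<not> (\<exists>x. P = {x})"
proof
  assume "\<exists>x. P = {x}"
  then obtain x where x: "P = {x}" by blast
  obtain g where g: "g \<in> isomX" "P = g ` H2std" using assms unfolding type2_plane_def by blast
  have "g (cls (mat 1)) = g (cls Lb)" using g(2) x H2std_two by blast
  then have "cls (mat 1) = cls Lb"
    using isomX_inj[OF g(1)] H2std_two H2std_Xsp unfolding inj_on_def by blast
  then show False using H2std_two by simp
qed

lemma fix_pos: assumes "A \<in> Pos1" obtains x0 where "x0 \<in> Xsp" "fixset (orev A) = {x0}"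
proof -
  obtain B where B: "B \<in> SL3" "A = B ** transpose B" using sqrt_SL3[OF assms] by blast
  have sA: "transpose A = A" "pd A" "A \<in> SL3" using assms unfolding Pos1_def Sym1_def by auto
  have dB: "det B = 1" using B unfolding SL3_def by simp
  have "fixset (orev A) = {cls B}"
  proof
    show "fixset (orev A) \<subseteq> {cls B}"
    proof
      fix x assume "x \<in> fixset (orev A)"
      then have x: "x \<in> Xsp" "orev A x = x" unfolding fixset_def by auto
      obtain M where M: "M \<in> SL3" "x = cls M" using x(1) unfolding Xsp_def by blast
      have dM: "det M = 1" using M unfolding SL3_def by simp
      have AM: "A ** mstar M \<in> SL3" using SL3_mul[OF sA(3) SL3_mstar[OF M(1)]] .
      have "cls (A ** mstar M) = cls M" using x(2) unfolding M(2) orev_cls[OF M(1)] .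
      then have "(A ** mstar M) ** transpose (A ** mstar M) = M ** transpose M"
        using cls_eq_gram[of "A ** mstar M" M] AM dM unfolding SL3_def by simp
      then have "A ** (mstar M ** transpose (mstar M)) ** transpose A = M ** transpose M"
        by (simp add: matrix_transpose_mul matrix_mul_assoc)
      then have "A ** matrix_inv (M ** transpose M) ** A = M ** transpose M"
        using mstar_gram dM sA(1) by simp
      then have "A = M ** transpose M"
        using pd_fix[OF sA(1,2) gram_pd(2) gram_pd(1)] dM by simp
      then have "cls M = cls B" using cls_eq_gram[of M B] dM dB B(2) by simp
      then show "x \<in> {cls B}" using M(2) by simp
    qed
    show "{cls B} \<subseteq> fixset (orev A)"
    proof -
      have "orev A (cls B) = cls (B ** (transpose B ** mstar B))"
        unfolding orev_cls[OF B(1)] B(2) by (simp add: matrix_mul_assoc)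
      also have "\<dots> = cls B" using mstar_tr1 dB by simp
      finally show ?thesis unfolding fixset_def using cls_Xsp[OF B(1)] by simp
    qed
  qed
  then show ?thesis using that cls_Xsp[OF B(1)] by blast
qed

lemma pos_not_type2: "A \<in> Pos1 \<Longrightarrow> \<not> type2_plane (fixset (orev A))"
  using fix_pos type2_not_single by metis

lemma J_sq: "J21 ** J21 = mat 1" by (simp add: J21_def bf)
lemma J_sym: "transpose J21 = J21" by (simp add: J21_def bf)
lemma mJ_SL3: "- J21 \<in> SL3" by (simp add: J21_def bf SL3_def)
lemma mJ_SO3: "- J21 \<in> SO3" by (simp add: J21_def bf SO3_def)
lemma mJ_sq: "(- J21) ** (- J21) = mat 1" by (simp add: J21_def bf)
lemma mJ_sym: "transpose (- J21) = - J21" by (simp add: J21_def bf)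
lemma mm_neg_l: "(- (A::mat3)) ** B = - (A ** B)" by (simp add: bf)
lemma mm_neg_r: "(A::mat3) ** (- B) = - (A ** B)" by (simp add: bf)



lemma SO21_fix: assumes L: "L \<in> SO21" shows "orev (- J21) (cls L) = cls L"
proof -
  have LJ: "transpose L ** J21 ** L = J21" and dL: "det L = 1" using L unfolding SO21_def by auto
  have "(J21 ** transpose L ** J21) ** L = J21 ** (transpose L ** J21 ** L)"
    by (simp add: matrix_mul_assoc)
  also have "\<dots> = mat 1" unfolding LJ J_sq ..
  finally have "L ** (J21 ** transpose L ** J21) = mat 1" using matrix_left_right_inverse by blast
  then have iL: "matrix_inv L = J21 ** transpose L ** J21" by (rule inv_unique)
  have msL: "mstar L = J21 ** L ** J21" unfolding mstar_def iL
    by (simp add: matrix_transpose_mul J_sym matrix_mul_assoc)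
  have "- J21 ** mstar L = L ** (- J21)" unfolding msL mm_neg_l mm_neg_r
    by (simp add: matrix_mul_assoc J_sq)
  then show ?thesis unfolding orev_cls[OF SO21_SL3[OF L]] using cls_mul_SO3[OF mJ_SO3] by simp
qed

lemma SO3_refl_form:
  assumes K: "K \<in> SO3" and sK: "transpose K = K" and np: "\<not> pd K"
  obtains Q where "Q ** transpose Q = mat 1" "transpose Q ** Q = mat 1" "det Q = 1"
    "K = Q ** (- J21) ** transpose Q"
proof -
  have dK: "det K = 1" and KK: "K ** transpose K = mat 1" using SO3_D[OF K] by auto
  obtain R lam k where R: "R ** transpose R = mat 1" "transpose R ** R = mat 1" "det R = 1"
    "K = R ** dg lam ** transpose R" and lk: "lam$k > 0" and li: "\<forall>i. i \<noteq> k \<longrightarrow> lam$i < 0"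
    using neg_spectral[OF sK _ np] dK by auto
  have "K ** K = R ** (dg lam ** (transpose R ** R) ** dg lam) ** transpose R"
    unfolding R(4) by (simp add: matrix_mul_assoc)
  then have "K ** K = R ** (dg lam ** dg lam) ** transpose R" unfolding R(2) by simp
  then have "transpose R ** (K ** K) ** R = (transpose R ** R) ** (dg lam ** dg lam) ** (transpose R ** R)"
    by (simp add: matrix_mul_assoc)
  then have "dg lam ** dg lam = mat 1" using KK sK R(2) by simp
  then have sq: "lam$i * lam$i = 1" for i
  proof -
    assume h0: "dg lam ** dg lam = mat 1"
    have "(dg lam ** dg lam)$i$i = (mat 1 :: mat3)$i$i" unfolding h0 ..
    then show ?thesis unfolding dg_mul by (simp add: dg_def mat_def)
  qed
  have sq2: "(lam$i - 1) * (lam$i + 1) = 0" for i using sq[of i] by (simp add: algebra_simps)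
  have "lam = (\<chi> i. if i = k then 1 else -1)"
  proof -
    have "lam$i = (if i = k then 1 else -1)" for i
    proof (cases "i = k")
      case True then show ?thesis using sq2[of i] lk by (auto simp: mult_eq_0_iff)
    next
      case False then have "lam$i < 0" using li by simp
      then show ?thesis using sq2[of i] False by (auto simp: mult_eq_0_iff)
    qed
    then show ?thesis by (simp add: vec_eq_iff)
  qed
  then have "K = R ** (2 *\<^sub>R outer (axis k 1) (axis k 1) - mat 1) ** transpose R"
    unfolding R(4) outer_axis by simp
  then have K2: "K = 2 *\<^sub>R outer (R *v axis k 1) (R *v axis k 1) - mat 1"
    unfolding refl_conj[OF R(1)] by simp
  have "(R *v axis k 1) \<bullet> (R *v axis k 1) = 1"
  proof -
    have "(R *v axis k 1) \<bullet> (R *v axis k 1) = (transpose R *v (R *v axis k 1)) \<bullet> axis k 1"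
      unfolding inner_matvec_tr ..
    also have "\<dots> = 1" unfolding matrix_vector_mul_assoc R(2) by simp
    finally show ?thesis .
  qed
  from unit_refl[OF this] obtain Q where "Q ** transpose Q = mat 1" "transpose Q ** Q = mat 1" "det Q = 1"
    "2 *\<^sub>R outer (R *v axis k 1) (R *v axis k 1) - mat 1 = Q ** (- J21) ** transpose Q" by blast
  then show ?thesis using that K2 by simp
qed

lemma fix_mJ: "fixset (orev (- J21)) = H2std"
proof
  show "H2std \<subseteq> fixset (orev (- J21))"
    unfolding H2std_def fixset_def using SO21_fix SO21_SL3 cls_Xsp by auto
  show "fixset (orev (- J21)) \<subseteq> H2std"
  proof
    fix x assume "x \<in> fixset (orev (- J21))"
    then have x: "x \<in> Xsp" "orev (- J21) x = x" unfolding fixset_def by auto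
    obtain N where N: "N \<in> SL3" "x = cls N" using x(1) unfolding Xsp_def by blast
    have dN: "det N = 1" "det N \<noteq> 0" using N unfolding SL3_def by auto
    have "cls (- J21 ** mstar N) = cls N" using x(2) unfolding N(2) orev_cls[OF N(1)] .
    then have "- J21 ** mstar N \<in> cls N" using mem_cls by metis
    then obtain K where K: "K \<in> SO3" "- J21 ** mstar N = N ** K" using cls_memD by blast
    have NKN: "N ** K ** transpose N = - J21"
    proof -
      have "N ** K ** transpose N = - J21 ** (mstar N ** transpose N)"
        using K(2) by (simp add: matrix_mul_assoc)
      then show ?thesis using mstar_tr2[OF dN(2)] by simp
    qed
    have Kdef: "K = matrix_inv N ** (- J21) ** mstar N"
    proof -
      have "matrix_inv N ** (- J21 ** mstar N) = (matrix_inv N ** N) ** K"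
        using K(2) by (simp add: matrix_mul_assoc)
      then show ?thesis using inv3(2)[OF dN(2)] by (simp add: matrix_mul_assoc)
    qed
    have sK: "transpose K = K"
      unfolding Kdef by (simp add: matrix_transpose_mul mJ_sym mstar_def matrix_mul_assoc)
    have npK: "\<not> pd K"
    proof
      assume "pd K"
      moreover have "transpose N *v axis 1 1 \<noteq> 0"
      proof
        assume "transpose N *v axis 1 1 = 0"
        then have "mstar N ** transpose N *v axis 1 1 = 0"
          by (simp add: matrix_vector_mul_assoc[symmetric] del: transpose_matrix_vector)
        then show False using mstar_tr2[OF dN(2)] axis_neq0 by simp
      qed
      ultimately have "0 < qf K (transpose N *v axis 1 1)" unfolding pd_def by blast
      also have "\<dots> = qf (N ** K ** transpose N) (axis 1 1)" by (rule qf_conj[symmetric])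
      also have "\<dots> = -1" unfolding NKN by (simp add: qf_def J21_def bf axis_def)
      finally show False by simp
    qed
    obtain Q where Q: "Q ** transpose Q = mat 1" "transpose Q ** Q = mat 1" "det Q = 1"
      "K = Q ** (- J21) ** transpose Q" using SO3_refl_form[OF K(1) sK npK] by blast
    have QS: "Q \<in> SO3" unfolding SO3_def using Q by simp
    define L where "L = N ** Q"
    have dL: "det L = 1" unfolding L_def using dN Q by (simp add: det_mul)
    have "L ** (- J21) ** transpose L = N ** K ** transpose N"
      unfolding L_def Q(4) by (simp add: matrix_transpose_mul matrix_mul_assoc)
    then have LJL: "L ** J21 ** transpose L = J21" unfolding NKN mm_neg_l mm_neg_r by simp
    have "(J21 ** L ** J21) ** transpose L = J21 ** (L ** J21 ** transpose L)"
      by (simp add: matrix_mul_assoc)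
    also have "\<dots> = mat 1" unfolding LJL J_sq ..
    finally have "transpose L ** (J21 ** L ** J21) = mat 1" using matrix_left_right_inverse by blast
    then have "transpose L ** J21 ** L ** J21 ** J21 = J21" by (simp add: matrix_mul_assoc)
    then have "transpose L ** J21 ** L = J21" by (simp add: matrix_mul_assoc[symmetric] J_sq)
    then have "L \<in> SO21" unfolding SO21_def using dL by simp
    moreover have "x = cls L" unfolding N(2) L_def using cls_mul_SO3[OF QS] by simp
    ultimately show "x \<in> H2std" unfolding H2std_def by blast
  qed
qed

lemma conj_orev:
  assumes B: "B \<in> SL3" and N: "N \<in> SL3"
  shows "orev (B ** (- J21) ** transpose B) (cls (B ** N)) = lmap B (orev (- J21) (cls N))"
proof -
  have dB: "det B \<noteq> 0" and dN: "det N \<noteq> 0" using B N unfolding SL3_def by auto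
  have BN: "B ** N \<in> SL3" using SL3_mul[OF B N] .
  have JN: "- J21 ** mstar N \<in> SL3" using SL3_mul[OF mJ_SL3 SL3_mstar[OF N]] .
  have "orev (B ** (- J21) ** transpose B) (cls (B ** N))
      = cls (B ** (- J21) ** (transpose B ** mstar B) ** mstar N)"
    unfolding orev_cls[OF BN] mstar_mul[OF dB dN] by (simp add: matrix_mul_assoc)
  also have "\<dots> = cls (B ** (- J21 ** mstar N))" unfolding mstar_tr1[OF dB]
    by (simp add: matrix_mul_assoc)
  also have "\<dots> = lmap B (orev (- J21) (cls N))" unfolding orev_cls[OF N] lmap_cls[OF JN] ..
  finally show ?thesis .
qed

lemma fix_conj:
  assumes B: "B \<in> SL3"
  shows "fixset (orev (B ** (- J21) ** transpose B)) = lmap B ` fixset (orev (- J21))"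
proof
  have dB: "det B \<noteq> 0" using B unfolding SL3_def by auto
  show "fixset (orev (B ** (- J21) ** transpose B)) \<subseteq> lmap B ` fixset (orev (- J21))"
  proof
    fix x assume "x \<in> fixset (orev (B ** (- J21) ** transpose B))"
    then have x: "x \<in> Xsp" "orev (B ** (- J21) ** transpose B) x = x" unfolding fixset_def by auto
    obtain M where M: "M \<in> SL3" "x = cls M" using x(1) unfolding Xsp_def by blast
    define N where "N = matrix_inv B ** M"
    have N: "N \<in> SL3" unfolding N_def using SL3_mul[OF SL3_inv[OF B] M(1)] .
    have BN: "B ** N = M" unfolding N_def using inv3(1)[OF dB] by (simp add: matrix_mul_assoc)
    have e1: "lmap B (orev (- J21) (cls N)) = cls M" using x(2) conj_orev[OF B N] BN M(2) by simp
    have e2: "lmap B (cls N) = cls M" using lmap_cls[OF N] BN by simp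
    have "lmap B (orev (- J21) (cls N)) = lmap B (cls N)" using e1 e2 by simp
    then have "orev (- J21) (cls N) = cls N"
      using lmap_inj[OF B orev_Xsp[OF mJ_SL3 cls_Xsp[OF N]] cls_Xsp[OF N]] by simp
    then have "cls N \<in> fixset (orev (- J21))" unfolding fixset_def using cls_Xsp[OF N] by simp
    moreover have "x = lmap B (cls N)" unfolding M(2) lmap_cls[OF N] BN ..
    ultimately show "x \<in> lmap B ` fixset (orev (- J21))" by blast
  qed
  show "lmap B ` fixset (orev (- J21)) \<subseteq> fixset (orev (B ** (- J21) ** transpose B))"
  proof
    fix y assume "y \<in> lmap B ` fixset (orev (- J21))"
    then obtain x where x: "x \<in> Xsp" "orev (- J21) x = x" "y = lmap B x" unfolding fixset_def by blast
    obtain N where N: "N \<in> SL3" "x = cls N" using x(1) unfolding Xsp_def by blast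
    have "y = cls (B ** N)" unfolding x(3) N(2) lmap_cls[OF N(1)] ..
    moreover have "orev (B ** (- J21) ** transpose B) (cls (B ** N)) = cls (B ** N)"
      unfolding conj_orev[OF B N(1)] using x(2) lmap_cls[OF N(1)] N(2) by simp
    ultimately show "y \<in> fixset (orev (B ** (- J21) ** transpose B))"
      unfolding fixset_def using cls_Xsp[OF SL3_mul[OF B N(1)]] by simp
  qed
qed

lemma neg_B: assumes "A \<in> Neg1" obtains B where "B \<in> SL3" "A = B ** (- J21) ** transpose B"
proof -
  have sA: "transpose A = A" "\<not> pd A" "det A = 1" using assms unfolding Neg1_def Sym1_def SL3_def by auto
  obtain M u where Mu: "transpose M = M" "pd M" "u \<bullet> u = 1" "A = M ** (2 *\<^sub>R outer u u - mat 1) ** M"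
    using neg_form[OF sA(1) _ sA(2)] sA(3) by auto
  obtain Q where Q: "Q ** transpose Q = mat 1" "transpose Q ** Q = mat 1" "det Q = 1"
    "2 *\<^sub>R outer u u - mat 1 = Q ** (- J21) ** transpose Q" using unit_refl[OF Mu(3)] by blast
  have "det M > 0" using pd_det_pos[OF Mu(1,2)] .
  moreover have "det M * det M = 1" using sA(3) Mu(3,4) det_refl[of u] by (simp add: det_mul)
  ultimately have dM: "det M = 1" by (rule det_pos_sq)
  define B where "B = M ** Q"
  have "B \<in> SL3" unfolding B_def SL3_def using dM Q by (simp add: det_mul)
  moreover have "A = B ** (- J21) ** transpose B"
    unfolding B_def Mu(4) Q(4) by (simp add: matrix_transpose_mul matrix_mul_assoc Mu(1))
  ultimately show ?thesis using that by blast
qed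

lemma lmap_isomX: "B \<in> SL3 \<Longrightarrow> lmap B \<in> isomX" unfolding isomX_def by blast

lemma Typ_eq: "{\<phi> \<in> InvolRev. type2_plane (fixset \<phi>)} = orev ` Neg1"
proof
  show "{\<phi> \<in> InvolRev. type2_plane (fixset \<phi>)} \<subseteq> orev ` Neg1"
  proof
    fix \<phi> assume "\<phi> \<in> {\<phi> \<in> InvolRev. type2_plane (fixset \<phi>)}"
    then have p: "\<phi> \<in> InvolRev" "type2_plane (fixset \<phi>)" by auto
    obtain A where A: "A \<in> Sym1" "\<phi> = orev A" using p(1) InvolRev_eq by auto
    have "A \<notin> Pos1" using pos_not_type2 p(2) A(2) by blast
    then have "A \<in> Neg1" using A(1) Sym1_split by blast
    then show "\<phi> \<in> orev ` Neg1" using A(2) by blast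
  qed
  show "orev ` Neg1 \<subseteq> {\<phi> \<in> InvolRev. type2_plane (fixset \<phi>)}"
  proof
    fix \<phi> assume "\<phi> \<in> orev ` Neg1"
    then obtain A where A: "A \<in> Neg1" "\<phi> = orev A" by blast
    have "\<phi> \<in> InvolRev" using A InvolRev_eq Sym1_split by blast
    moreover obtain B where B: "B \<in> SL3" "A = B ** (- J21) ** transpose B" using neg_B[OF A(1)] by blast
    have "type2_plane (fixset \<phi>)" unfolding type2_plane_def A(2) B(2) fix_conj[OF B(1)] fix_mJ
      using lmap_isomX[OF B(1)] by blast
    ultimately show "\<phi> \<in> {\<phi> \<in> InvolRev. type2_plane (fixset \<phi>)}" by blast
  qed
qed



lemma istop_X: "istopology (\<lambda>U. U \<subseteq> Xsp \<and> openin (top_of_set SL3) {M \<in> SL3. cls M \<in> U})"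
proof -
  have A: "S \<inter> T \<subseteq> Xsp \<and> openin (top_of_set SL3) {M \<in> SL3. cls M \<in> S \<inter> T}"
    if S: "S \<subseteq> Xsp \<and> openin (top_of_set SL3) {M \<in> SL3. cls M \<in> S}"
     and T: "T \<subseteq> Xsp \<and> openin (top_of_set SL3) {M \<in> SL3. cls M \<in> T}" for S T :: "mat3 set set"
  proof -
    have "{M \<in> SL3. cls M \<in> S \<inter> T} = {M \<in> SL3. cls M \<in> S} \<inter> {M \<in> SL3. cls M \<in> T}" by blast
    then show ?thesis using S T by (simp add: openin_Int le_infI1)
  qed
  have B: "\<Union>K \<subseteq> Xsp \<and> openin (top_of_set SL3) {M \<in> SL3. cls M \<in> \<Union>K}"
    if K: "\<forall>S\<in>K. S \<subseteq> Xsp \<and> openin (top_of_set SL3) {M \<in> SL3. cls M \<in> S}" for K :: "mat3 set set set"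
  proof -
    have "{M \<in> SL3. cls M \<in> \<Union>K} = \<Union> ((\<lambda>S. {M \<in> SL3. cls M \<in> S}) ` K)" by blast
    moreover have "openin (top_of_set SL3) (\<Union> ((\<lambda>S. {M \<in> SL3. cls M \<in> S}) ` K))"
      using K by (intro openin_Union) blast
    ultimately show ?thesis using K by auto
  qed
  show ?thesis unfolding istopology_def using A B by blast
qed

lemma openin_topX: "openin topX U \<longleftrightarrow> U \<subseteq> Xsp \<and> openin (top_of_set SL3) {M \<in> SL3. cls M \<in> U}"
  unfolding topX_def using istop_X by simp

lemma topspace_topX: "topspace topX = Xsp"
proof -
  have "{M \<in> SL3. cls M \<in> Xsp} = SL3" using cls_Xsp by blast
  then have "openin topX Xsp" unfolding openin_topX
    using openin_topspace[of "top_of_set SL3"] by simp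
  then have "Xsp \<subseteq> topspace topX" by (rule openin_subset)
  moreover have "topspace topX \<subseteq> Xsp" using openin_topspace[of topX] unfolding openin_topX by blast
  ultimately show ?thesis by blast
qed

lemma cls_cont: "continuous_map (top_of_set SL3) topX cls"
  unfolding continuous_map_def topspace_topX
proof (intro conjI allI impI)
  show "cls \<in> topspace (top_of_set SL3) \<rightarrow> Xsp" using cls_Xsp by auto
  fix U assume "openin topX U"
  then show "openin (top_of_set SL3) {x \<in> topspace (top_of_set SL3). cls x \<in> U}"
    unfolding openin_topX by simp
qed

lemma cls_comp_cont:
  assumes "continuous_on S f" "f ` S \<subseteq> SL3"
  shows "continuous_map (top_of_set S) topX (\<lambda>x. cls (f x))"
proof -
  have c: "continuous_map (top_of_set S) (top_of_set SL3) f"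
    using assms by (auto simp: continuous_map_into_subtopology)
  have "continuous_map (top_of_set S) topX (cls \<circ> f)" by (rule continuous_map_compose[OF c cls_cont])
  then show ?thesis unfolding comp_def .
qed

definition gram :: "mat3 set \<Rightarrow> mat3" where "gram x = rep x ** transpose (rep x)"

lemma gram_cls: "gram (cls M) = M ** transpose M"
  unfolding gram_def by (rule gram_cls_rep)

lemma gram_entry_cont: "continuous_on S (\<lambda>M::mat3. (M ** transpose M) $ a $ b)"
  unfolding rows_inner by (intro continuous_intros)

lemma gram_cont: "continuous_map topX euclideanreal (\<lambda>x. gram x $ a $ b)"
  unfolding continuous_map_def topspace_topX
proof (intro conjI allI impI)
  show "(\<lambda>x. gram x $ a $ b) \<in> Xsp \<rightarrow> topspace euclideanreal" by simp
  fix V :: "real set" assume "openin euclideanreal V"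
  then have oV: "open V" by simp
  show "openin topX {x \<in> Xsp. gram x $ a $ b \<in> V}"
    unfolding openin_topX
  proof
    show "{x \<in> Xsp. gram x $ a $ b \<in> V} \<subseteq> Xsp" by blast
    have "{M \<in> SL3. cls M \<in> {x \<in> Xsp. gram x $ a $ b \<in> V}} = SL3 \<inter> (\<lambda>M. (M ** transpose M) $ a $ b) -` V"
      using cls_Xsp gram_cls by auto
    moreover have "openin (top_of_set SL3) (SL3 \<inter> (\<lambda>M. (M ** transpose M) $ a $ b) -` V)"
      by (rule continuous_openin_preimage_gen[OF gram_entry_cont oV])
    ultimately show "openin (top_of_set SL3) {M \<in> SL3. cls M \<in> {x \<in> Xsp. gram x $ a $ b \<in> V}}"
      by simp
  qed
qed

lemma ev_cont: assumes "p \<in> Xsp"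
  shows "continuous_map mapsX_top euclideanreal (\<lambda>\<phi>. gram (\<phi> p) $ a $ b)"
proof -
  have "continuous_map mapsX_top topX (\<lambda>\<phi>. \<phi> p)"
    unfolding mapsX_top_def using continuous_map_product_projection[OF assms] .
  then have "continuous_map mapsX_top euclideanreal ((\<lambda>x. gram x $ a $ b) \<circ> (\<lambda>\<phi>. \<phi> p))"
    using continuous_map_compose[OF _ gram_cont] by blast
  then show ?thesis unfolding comp_def .
qed

lemma mm_cont: "continuous_on S f \<Longrightarrow> continuous_on S g \<Longrightarrow> continuous_on S (\<lambda>x. (f x :: mat3) ** g x)"
  unfolding matrix_matrix_mult_def by (intro continuous_intros)

lemma orev_map_cont:
  assumes "continuous_on S f" "f ` S \<subseteq> SL3"
  shows "continuous_map (top_of_set S) mapsX_top (\<lambda>s. orev (f s))"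
  unfolding mapsX_top_def continuous_map_componentwise
proof (intro conjI ballI)
  show "(\<lambda>s. orev (f s)) ` topspace (top_of_set S) \<subseteq> extensional Xsp"
    unfolding orev_def by auto
  fix y assume y: "y \<in> Xsp"
  have "continuous_map (top_of_set S) topX (\<lambda>s. cls (f s ** mstar (rep y)))"
  proof (rule cls_comp_cont)
    show "continuous_on S (\<lambda>s. f s ** mstar (rep y))" by (intro mm_cont assms(1) continuous_intros)
    show "(\<lambda>s. f s ** mstar (rep y)) ` S \<subseteq> SL3"
      using assms(2) SL3_mul SL3_mstar rep_SL3[OF y] by blast
  qed
  moreover have "orev (f s) y = cls (f s ** mstar (rep y))" for s unfolding orev_def using y by simp
  ultimately show "continuous_map (top_of_set S) topX (\<lambda>s. orev (f s) y)" by simp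
qed



definition PosC :: "mat3 set" where "PosC = {P. transpose P = P \<and> pd P}"
definition nrm :: "mat3 \<Rightarrow> mat3" where "nrm P = (1 / root 3 (det P)) *\<^sub>R P"

lemma transpose_lin: "transpose (u *\<^sub>R (P::mat3) + v *\<^sub>R Q) = u *\<^sub>R transpose P + v *\<^sub>R transpose Q"
  by (simp add: bf)
lemma qf_lin: "qf (u *\<^sub>R (P::mat3) + v *\<^sub>R Q) x = u * qf P x + v * qf Q x"
  by (simp add: qf_def bf algebra_simps)
lemma qf_smul: "qf (c *\<^sub>R (P::mat3)) x = c * qf P x"
  by (simp add: qf_def bf algebra_simps)
lemma det_smul: "det (c *\<^sub>R (P::mat3)) = c^3 * det P"
  by (simp add: bf algebra_simps power3_eq_cube)
lemma transpose_smul: "transpose (c *\<^sub>R (P::mat3)) = c *\<^sub>R transpose P"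
  by (simp add: bf)

lemma convex_PosC: "convex PosC"
  unfolding convex_def PosC_def
proof (intro ballI allI impI)
  fix P Q :: mat3 and u v :: real
  assume P: "P \<in> {P. transpose P = P \<and> pd P}" and Q: "Q \<in> {P. transpose P = P \<and> pd P}"
    and u: "0 \<le> u" and v: "0 \<le> v" and uv: "u + v = 1"
  have "transpose (u *\<^sub>R P + v *\<^sub>R Q) = u *\<^sub>R P + v *\<^sub>R Q" using P Q by (simp add: transpose_lin)
  moreover have "pd (u *\<^sub>R P + v *\<^sub>R Q)" unfolding pd_def qf_lin
  proof (intro allI impI)
    fix x :: "real^3" assume "x \<noteq> 0"
    then have a: "qf P x > 0" and b: "qf Q x > 0" using P Q unfolding pd_def by auto
    show "0 < u * qf P x + v * qf Q x"
    proof (cases "u > 0")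
      case True
      then have "u * qf P x > 0" using a by simp
      moreover have "v * qf Q x \<ge> 0" using v b by simp
      ultimately show ?thesis by simp
    next
      case False
      then have "u = 0" using u by simp
      then show ?thesis using uv b by simp
    qed
  qed
  ultimately show "u *\<^sub>R P + v *\<^sub>R Q \<in> {P. transpose P = P \<and> pd P}" by simp
qed

lemma root3_cube: "x > 0 \<Longrightarrow> (root 3 x)^3 = x" by simp

lemma nrm_props: assumes "transpose P = P" "det P > 0"
  shows "transpose (nrm P) = nrm P" "det (nrm P) = 1" "qf (nrm P) x = (1 / root 3 (det P)) * qf P x"
    "1 / root 3 (det P) > 0"
proof -
  show "transpose (nrm P) = nrm P" unfolding nrm_def transpose_smul assms(1) ..
  show "det (nrm P) = 1" unfolding nrm_def det_smul using assms(2)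
    by (simp add: power_divide)
  show "qf (nrm P) x = (1 / root 3 (det P)) * qf P x" unfolding nrm_def qf_smul ..
  show "1 / root 3 (det P) > 0" using assms(2) by simp
qed

lemma nrm_id: "det P = 1 \<Longrightarrow> nrm P = P" unfolding nrm_def by simp

lemma nrm_Pos1: assumes "P \<in> PosC" shows "nrm P \<in> Pos1"
proof -
  have P: "transpose P = P" "pd P" using assms unfolding PosC_def by auto
  have d: "det P > 0" using pd_det_pos[OF P] .
  note n = nrm_props[OF P(1) d]
  have "pd (nrm P)" unfolding pd_def n(3) using P(2) n(4) unfolding pd_def by simp
  then show ?thesis unfolding Pos1_def Sym1_def SL3_def using n(1,2) by simp
qed

lemma Pos1_PosC: "A \<in> Pos1 \<Longrightarrow> A \<in> PosC" unfolding Pos1_def Sym1_def PosC_def by auto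

lemma det_cont: "continuous_on S f \<Longrightarrow> continuous_on S (\<lambda>z. det (f z :: mat3))"
  unfolding det_3 by (intro continuous_intros)

lemma nrm_cont: assumes "continuous_on S f" "\<forall>z\<in>S. det (f z) > 0"
  shows "continuous_on S (\<lambda>z. nrm (f z))"
proof -
  have h: "\<forall>x\<in>S. det (f x) \<noteq> 0" using assms(2) by force
  show ?thesis unfolding nrm_def
    by (intro continuous_intros assms(1) det_cont) (use h in auto)
qed

lemma Inv_image: "inversion ` Xsp = (\<lambda>P. orev (nrm P)) ` PosC"
proof
  show "inversion ` Xsp \<subseteq> (\<lambda>P. orev (nrm P)) ` PosC"
  proof
    fix \<phi> assume "\<phi> \<in> inversion ` Xsp"
    then obtain A where A: "A \<in> Pos1" "\<phi> = orev A" unfolding inversions_eq by blast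
    have "nrm A = A" using A(1) nrm_id unfolding Pos1_def Sym1_def SL3_def by simp
    then show "\<phi> \<in> (\<lambda>P. orev (nrm P)) ` PosC" using A Pos1_PosC by (metis image_eqI)
  qed
  show "(\<lambda>P. orev (nrm P)) ` PosC \<subseteq> inversion ` Xsp"
    unfolding inversions_eq using nrm_Pos1 by blast
qed

lemma Inv_connected: "connectedin mapsX_top (inversion ` Xsp)"
proof -
  have c: "continuous_map (top_of_set PosC) mapsX_top (\<lambda>P. orev (nrm P))"
  proof (rule orev_map_cont)
    show "continuous_on PosC nrm"
      using nrm_cont[of PosC "\<lambda>P. P"] pd_det_pos unfolding PosC_def by (auto intro: continuous_on_id)
    show "nrm ` PosC \<subseteq> SL3" using nrm_Pos1 unfolding Pos1_def Sym1_def by blast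
  qed
  have "connectedin (top_of_set PosC) PosC" using convex_connected[OF convex_PosC] by simp
  from connectedin_continuous_map_image[OF c this] show ?thesis unfolding Inv_image .
qed

definition Qs :: "(mat3 \<times> (real^3)) set" where "Qs = Sigma PosC (\<lambda>_. sphere 0 1)"
definition Fm :: "mat3 \<times> (real^3) \<Rightarrow> mat3" where
  "Fm z = nrm (fst z ** (2 *\<^sub>R outer (snd z) (snd z) - mat 1) ** fst z)"

lemma qf_refl: "qf (2 *\<^sub>R outer u u - mat 1) v = 2 * (u \<bullet> v)^2 - v \<bullet> v"
  by (simp add: qf_def bf algebra_simps power2_eq_square)

lemma sym_refl: "transpose (2 *\<^sub>R outer u u - mat 1) = 2 *\<^sub>R outer u u - mat 1"
  by (simp add: bf)

lemma Fm_Neg1: assumes "z \<in> Qs" shows "Fm z \<in> Neg1"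
proof -
  obtain M u where z: "z = (M, u)" "M \<in> PosC" "u \<in> sphere 0 1" using assms unfolding Qs_def by auto
  have M: "transpose M = M" "pd M" using z(2) unfolding PosC_def by auto
  have uu: "u \<bullet> u = 1" using z(3) by (simp add: norm_eq_1)
  define A0 where "A0 = M ** (2 *\<^sub>R outer u u - mat 1) ** M"
  have dM: "det M > 0" using pd_det_pos[OF M] .
  have dA: "det A0 > 0" unfolding A0_def det_mul det_refl uu using dM by simp
  have sA: "transpose A0 = A0" unfolding A0_def
    by (simp add: matrix_transpose_mul sym_refl M(1) matrix_mul_assoc)
  obtain v where v: "v \<bullet> v = 1" "v \<bullet> u = 0" using perp_exists[OF uu] by blast
  define x where "x = matrix_inv M *v v"
  have dM0: "det M \<noteq> 0" using dM by simp
  have Mx: "M *v x = v" unfolding x_def matrix_vector_mul_assoc inv3(1)[OF dM0] by simp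
  have x0: "x \<noteq> 0" using Mx v by auto
  have qA: "qf A0 x = -1"
  proof -
    have "qf A0 x = qf (2 *\<^sub>R outer u u - mat 1) v"
      using qf_conj[of M "2 *\<^sub>R outer u u - mat 1" x] M(1) Mx unfolding A0_def by simp
    also have "\<dots> = -1" unfolding qf_refl using v by (simp add: inner_commute)
    finally show ?thesis .
  qed
  note n = nrm_props[OF sA dA]
  have "\<not> pd (nrm A0)" unfolding pd_def n(3)
  proof
    assume "\<forall>x. x \<noteq> 0 \<longrightarrow> 0 < 1 / root 3 (det A0) * qf A0 x"
    then have "0 < 1 / root 3 (det A0) * qf A0 x" using x0 by blast
    then show False unfolding qA using n(4) by (simp add: mult_less_0_iff)
  qed
  then show ?thesis unfolding Neg1_def Sym1_def SL3_def Fm_def z(1) using n(1,2) A0_def by simp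
qed

lemma Typ_image: "orev ` Neg1 = (\<lambda>z. orev (Fm z)) ` Qs"
proof
  show "orev ` Neg1 \<subseteq> (\<lambda>z. orev (Fm z)) ` Qs"
  proof
    fix \<phi> assume "\<phi> \<in> orev ` Neg1"
    then obtain A where A: "A \<in> Neg1" "\<phi> = orev A" by blast
    have sA: "transpose A = A" "\<not> pd A" "det A = 1" using A(1) unfolding Neg1_def Sym1_def SL3_def by auto
    obtain M u where Mu: "transpose M = M" "pd M" "u \<bullet> u = 1" "A = M ** (2 *\<^sub>R outer u u - mat 1) ** M"
      using neg_form[OF sA(1) _ sA(2)] sA(3) by auto
    have "(M, u) \<in> Qs" unfolding Qs_def PosC_def using Mu by (simp add: norm_eq_1)
    moreover have "Fm (M, u) = A" unfolding Fm_def using Mu(4) nrm_id[OF sA(3)] by simp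
    ultimately show "\<phi> \<in> (\<lambda>z. orev (Fm z)) ` Qs" using A(2) by (metis image_eqI)
  qed
  show "(\<lambda>z. orev (Fm z)) ` Qs \<subseteq> orev ` Neg1" using Fm_Neg1 by blast
qed

lemma outer_cont: "continuous_on S f \<Longrightarrow> continuous_on S (\<lambda>z. outer (f z) (f z))"
  unfolding outer_def by (intro continuous_intros)

lemma Typ_connected: "connectedin mapsX_top (orev ` Neg1)"
proof -
  have c: "continuous_map (top_of_set Qs) mapsX_top (\<lambda>z. orev (Fm z))"
  proof (rule orev_map_cont)
    have cc: "continuous_on Qs (\<lambda>z. fst z ** (2 *\<^sub>R outer (snd z) (snd z) - mat 1) ** fst z)"
      by (intro mm_cont continuous_intros outer_cont)
    have dd: "\<forall>z\<in>Qs. det (fst z ** (2 *\<^sub>R outer (snd z) (snd z) - mat 1) ** fst z) > 0"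
    proof
      fix z assume "z \<in> Qs"
      then obtain M u where z: "z = (M, u)" "M \<in> PosC" "u \<in> sphere 0 1" unfolding Qs_def by auto
      have "det M > 0" using z(2) pd_det_pos unfolding PosC_def by auto
      moreover have "u \<bullet> u = 1" using z(3) by (simp add: norm_eq_1)
      ultimately show "det (fst z ** (2 *\<^sub>R outer (snd z) (snd z) - mat 1) ** fst z) > 0"
        unfolding z(1) det_mul det_refl by simp
    qed
    show "continuous_on Qs Fm" unfolding Fm_def using nrm_cont[OF cc dd] .
    show "Fm ` Qs \<subseteq> SL3" using Fm_Neg1 unfolding Neg1_def Sym1_def by blast
  qed
  have "connected Qs" unfolding Qs_def
    by (rule connected_Times[OF convex_connected[OF convex_PosC] connected_sphere]) simp
  then have "connectedin (top_of_set Qs) Qs" by simp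
  from connectedin_continuous_map_image[OF c this] show ?thesis unfolding Typ_image .
qed



definition adj3 :: "mat3 \<Rightarrow> mat3" where
  "adj3 M = vector [
     vector [M$2$2*M$3$3 - M$2$3*M$3$2, M$1$3*M$3$2 - M$1$2*M$3$3, M$1$2*M$2$3 - M$1$3*M$2$2],
     vector [M$2$3*M$3$1 - M$2$1*M$3$3, M$1$1*M$3$3 - M$1$3*M$3$1, M$1$3*M$2$1 - M$1$1*M$2$3],
     vector [M$2$1*M$3$2 - M$2$2*M$3$1, M$1$2*M$3$1 - M$1$1*M$3$2, M$1$1*M$2$2 - M$1$2*M$2$1]]"

lemma adj3_mul: "M ** adj3 M = det M *\<^sub>R mat 1"
  by (simp add: adj3_def bf algebra_simps)

lemma adj3_inv: assumes "det M = 1" shows "adj3 M = matrix_inv M"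
  using inv_unique[of M "adj3 M"] adj3_mul[of M] assms by simp

lemma e2_adj3: "e2 (adj3 A) = trace A * det A"
  by (simp add: e2_def adj3_def trace_def bf algebra_simps)

definition Tp :: "(mat3 \<Rightarrow> mat3) \<Rightarrow> 3 \<Rightarrow> 3 \<Rightarrow> real" where
  "Tp g i j = (g (Up i j) $i$j - g (Um i j) $i$j) / 2 - (g (Up i j) $j$j + g (Um i j) $j$j)
      + 2 * g (mat 1) $j$j"

definition Fe2 :: "(mat3 \<Rightarrow> mat3) \<Rightarrow> real" where
  "Fe2 g = Tp g 1 2 + Tp g 1 3 + Tp g 2 3"

lemma Fe2_ok: assumes "transpose A = A"
  shows "Fe2 (\<lambda>U. A ** U ** transpose U ** A) = e2 A"
  using sym3[OF assms]
  by (simp add: Fe2_def Tp_def e2_def Up_def Um_def Eij_def bf algebra_simps; simp add: field_simps)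

definition Uset :: "mat3 set" where
  "Uset = {mat 1, Up 1 2, Um 1 2, Up 1 3, Um 1 3, Up 2 3, Um 2 3}"

lemma Uset_SL3: "U \<in> Uset \<Longrightarrow> U \<in> SL3"
  unfolding Uset_def using Up_SL3 Um_SL3 I_SL3 by auto

lemma Fe2_cong: "(\<And>U. U \<in> Uset \<Longrightarrow> g U = g' U) \<Longrightarrow> Fe2 g = Fe2 g'"
  unfolding Fe2_def Tp_def Uset_def by simp

definition T1 :: "(mat3 set \<Rightarrow> mat3 set) \<Rightarrow> real" where
  "T1 \<phi> = Fe2 (\<lambda>U. adj3 (gram (\<phi> (cls U))))"
definition T2 :: "(mat3 set \<Rightarrow> mat3 set) \<Rightarrow> real" where
  "T2 \<phi> = Fe2 (\<lambda>U. gram (\<phi> (cls (mstar U))))"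
definition hsep :: "(mat3 set \<Rightarrow> mat3 set) \<Rightarrow> real" where
  "hsep \<phi> = min (T1 \<phi>) (T2 \<phi>)"

lemma T2_val: assumes "A \<in> Sym1" shows "T2 (orev A) = e2 A"
proof -
  have sA: "transpose A = A" using assms unfolding Sym1_def by simp
  have "gram (orev A (cls (mstar U))) = A ** U ** transpose U ** A" if "U \<in> Uset" for U
  proof -
    have U: "U \<in> SL3" using Uset_SL3[OF that] .
    have dU: "det U \<noteq> 0" using U unfolding SL3_def by simp
    have "orev A (cls (mstar U)) = cls (A ** U)"
      unfolding orev_cls[OF SL3_mstar[OF U]] mstar_mstar[OF dU] ..
    then show ?thesis by (simp add: gram_cls matrix_transpose_mul sA matrix_mul_assoc)
  qed
  then have "T2 (orev A) = Fe2 (\<lambda>U. A ** U ** transpose U ** A)" unfolding T2_def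
    by (rule Fe2_cong)
  then show ?thesis using Fe2_ok[OF sA] by simp
qed

lemma T1_val: assumes "A \<in> Sym1" shows "T1 (orev A) = trace A"
proof -
  have sA: "transpose A = A" "det A = 1" using assms unfolding Sym1_def SL3_def by auto
  have dA: "det A \<noteq> 0" using sA by simp
  define Ai where "Ai = matrix_inv A"
  have sAi: "transpose Ai = Ai" unfolding Ai_def using inv_transpose3[OF dA] sA by simp
  have "adj3 (gram (orev A (cls U))) = Ai ** U ** transpose U ** Ai" if "U \<in> Uset" for U
  proof -
    have U: "U \<in> SL3" using Uset_SL3[OF that] .
    have dU: "det U = 1" using U unfolding SL3_def by simp
    have "gram (orev A (cls U)) = A ** (mstar U ** transpose (mstar U)) ** A"
      unfolding orev_cls[OF U] gram_cls by (simp add: matrix_transpose_mul matrix_mul_assoc sA)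
    then have G: "gram (orev A (cls U)) = A ** matrix_inv (U ** transpose U) ** A"
      using mstar_gram[of U] dU by simp
    have dUU: "det (U ** transpose U) \<noteq> 0" using dU by (simp add: det_mul)
    have dG: "det (A ** matrix_inv (U ** transpose U) ** A) = 1"
      using sA dU det_inv3[OF dUU] by (simp add: det_mul)
    have dI: "det (matrix_inv (U ** transpose U)) \<noteq> 0" using det_inv3[OF dUU] dUU by simp
    have "adj3 (gram (orev A (cls U))) = matrix_inv (A ** matrix_inv (U ** transpose U) ** A)"
      unfolding G using adj3_inv[OF dG] .
    also have "\<dots> = Ai ** (U ** transpose U) ** Ai"
      unfolding Ai_def using dA dI dUU
      by (simp add: inv_mul3 det_mul inv_inv3 matrix_mul_assoc)
    finally show ?thesis by (simp add: matrix_mul_assoc)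
  qed
  then have "T1 (orev A) = Fe2 (\<lambda>U. Ai ** U ** transpose U ** Ai)" unfolding T1_def
    by (rule Fe2_cong)
  also have "\<dots> = e2 Ai" using Fe2_ok[OF sAi] .
  also have "Ai = adj3 A" unfolding Ai_def using adj3_inv[OF sA(2)] by simp
  finally show ?thesis using e2_adj3 sA(2) by simp
qed

lemma hsep_pos: "A \<in> Pos1 \<Longrightarrow> hsep (orev A) > 0"
proof -
  assume A: "A \<in> Pos1"
  then have S: "A \<in> Sym1" and sA: "transpose A = A" "pd A" "det A = 1"
    unfolding Pos1_def Sym1_def SL3_def by auto
  have "trace A > 0 \<and> e2 A > 0" using sym_sign(1)[OF sA(1)] sA by simp
  then show ?thesis unfolding hsep_def T1_val[OF S] T2_val[OF S] by simp
qed

lemma hsep_neg: "A \<in> Neg1 \<Longrightarrow> hsep (orev A) < 0"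
proof -
  assume A: "A \<in> Neg1"
  then have S: "A \<in> Sym1" and sA: "transpose A = A" "\<not> pd A" "det A = 1"
    unfolding Neg1_def Sym1_def SL3_def by auto
  have "trace A < 0 \<or> e2 A < 0" using sym_sign(2)[OF sA(1)] sA by simp
  then show ?thesis unfolding hsep_def T1_val[OF S] T2_val[OF S] by auto
qed

lemma ev_cont2: "U \<in> SL3 \<Longrightarrow> continuous_map mapsX_top euclideanreal (\<lambda>\<phi>. gram (\<phi> (cls (mstar U))) $ a $ b)"
  by (rule ev_cont) (rule cls_Xsp, rule SL3_mstar)

lemma ev_cont1: "U \<in> SL3 \<Longrightarrow> continuous_map mapsX_top euclideanreal (\<lambda>\<phi>. gram (\<phi> (cls U)) $ a $ b)"
  by (rule ev_cont) (rule cls_Xsp)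

lemma adj_cont: assumes "\<And>a b. continuous_map X euclideanreal (\<lambda>\<phi>. G \<phi> $ a $ b)"
  shows "continuous_map X euclideanreal (\<lambda>\<phi>. adj3 (G \<phi>) $ a $ b)"
proof -
  have "\<forall>a b. continuous_map X euclideanreal (\<lambda>\<phi>. adj3 (G \<phi>) $ a $ b)"
    unfolding forall_3 adj3_def by (simp add: vector_3) (intro conjI continuous_intros assms)
  then show ?thesis by blast
qed

lemma T2_cont: "continuous_map mapsX_top euclideanreal T2"
  unfolding T2_def[abs_def] Fe2_def Tp_def
  by (intro continuous_intros ev_cont2 Up_SL3 Um_SL3 I_SL3) auto

lemma T1_cont: "continuous_map mapsX_top euclideanreal T1"
  unfolding T1_def[abs_def] Fe2_def Tp_def
  by (intro continuous_intros adj_cont ev_cont1 Up_SL3 Um_SL3 I_SL3) auto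

lemma hsep_cont: "continuous_map mapsX_top euclideanreal hsep"
  unfolding hsep_def[abs_def] by (intro continuous_intros T1_cont T2_cont)



lemma two_comps:
  assumes tU: "topspace X = U \<union> V" and d: "U \<inter> V = {}" and oU: "openin X U" and oV: "openin X V"
    and cU: "connectedin X U" and cV: "connectedin X V" and nU: "U \<noteq> {}" and nV: "V \<noteq> {}"
  shows "connected_components_of X = {U, V}"
proof -
  have e1: "topspace X - U = V" using tU d by blast
  have e2: "topspace X - V = U" using tU d by blast
  have clU: "closedin X U" unfolding closedin_def e1 using oV tU by simp
  have clV: "closedin X V" unfolding closedin_def e2 using oU tU by simp
  have comp: "connected_component_of_set X x = W"
    if W: "connectedin X W" "closedin X W" "openin X W" and x: "x \<in> W" for W x
  proof
    show "W \<subseteq> connected_component_of_set X x" by (rule connected_component_of_maximal[OF W(1) x])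
    have xt: "x \<in> topspace X" using x openin_subset[OF W(3)] by blast
    have "connected_component_of_set X x \<subseteq> W \<or> disjnt (connected_component_of_set X x) W"
      by (rule connectedin_clopen_cases[OF connectedin_connected_component_of W(2,3)])
    moreover have "x \<in> connected_component_of_set X x" using xt connected_component_of_refl by fastforce
    ultimately show "connected_component_of_set X x \<subseteq> W" using x unfolding disjnt_def by blast
  qed
  have "connected_components_of X = connected_component_of_set X ` (U \<union> V)"
    unfolding connected_components_of_def tU ..
  also have "\<dots> = {U, V}"
  proof
    show "connected_component_of_set X ` (U \<union> V) \<subseteq> {U, V}"
      using comp[OF cU clU oU] comp[OF cV clV oV] by blast
    obtain u v where "u \<in> U" "v \<in> V" using nU nV by blast
    then show "{U, V} \<subseteq> connected_component_of_set X ` (U \<union> V)"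
      using comp[OF cU clU oU] comp[OF cV clV oV] by (metis UnCI image_eqI insert_subset empty_subsetI)
  qed
  finally show ?thesis .
qed

lemma InvolRev_top: "InvolRev \<subseteq> topspace mapsX_top"
proof
  fix \<phi> assume "\<phi> \<in> InvolRev"
  then obtain A where A: "A \<in> Sym1" "\<phi> = orev A" using InvolRev_eq by blast
  have "A \<in> SL3" using A(1) unfolding Sym1_def by simp
  then show "\<phi> \<in> topspace mapsX_top"
    unfolding mapsX_top_def topspace_product_topology topspace_topX A(2)
    using orev_Xsp by (auto simp: PiE_def orev_def)
qed

lemma mJ_Neg1: "- J21 \<in> Neg1"
proof -
  have "qf (- J21) (axis 1 1) = -1" by (simp add: qf_def J21_def bf axis_def)
  then have "\<not> pd (- J21)" unfolding pd_def using axis_neq0[of 1]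
    by (metis neg_0_less_iff_less zero_less_one not_less_iff_gr_or_eq)
  then show ?thesis unfolding Neg1_def Sym1_def using mJ_SL3 mJ_sym by simp
qed

theorem lemma2p2:
  shows "connected_components_of (subtopology mapsX_top InvolRev) =
           {inversion ` Xsp, {\<phi> \<in> InvolRev. type2_plane (fixset \<phi>)}}
         \<and> inversion ` Xsp \<noteq> {\<phi> \<in> InvolRev. type2_plane (fixset \<phi>)}"
proof -
  define X where "X = subtopology mapsX_top InvolRev"
  define U where "U = inversion ` Xsp"
  define V where "V = {\<phi> \<in> InvolRev. type2_plane (fixset \<phi>)}"
  have U1: "U = orev ` Pos1" unfolding U_def inversions_eq ..
  have V1: "V = orev ` Neg1" unfolding V_def Typ_eq ..
  have tX: "topspace X = InvolRev" unfolding X_def using InvolRev_top by auto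
  have hc: "continuous_map X euclideanreal hsep"
    unfolding X_def by (rule continuous_map_from_subtopology[OF hsep_cont])
  have Ueq: "U = {\<phi> \<in> topspace X. hsep \<phi> \<in> {0<..}}"
  proof
    show "U \<subseteq> {\<phi> \<in> topspace X. hsep \<phi> \<in> {0<..}}"
      unfolding U1 tX InvolRev_eq Sym1_split using hsep_pos by auto
    show "{\<phi> \<in> topspace X. hsep \<phi> \<in> {0<..}} \<subseteq> U"
      unfolding U1 tX InvolRev_eq Sym1_split using hsep_neg by fastforce
  qed
  have Veq: "V = {\<phi> \<in> topspace X. hsep \<phi> \<in> {..<0}}"
  proof
    show "V \<subseteq> {\<phi> \<in> topspace X. hsep \<phi> \<in> {..<0}}"
      unfolding V1 tX InvolRev_eq Sym1_split using hsep_neg by auto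
    show "{\<phi> \<in> topspace X. hsep \<phi> \<in> {..<0}} \<subseteq> V"
      unfolding V1 tX InvolRev_eq Sym1_split using hsep_pos by fastforce
  qed
  have oU: "openin X U" unfolding Ueq
    by (rule openin_continuous_map_preimage[OF hc]) simp
  have oV: "openin X V" unfolding Veq
    by (rule openin_continuous_map_preimage[OF hc]) simp
  have tUV: "topspace X = U \<union> V" unfolding tX U1 V1 InvolRev_eq Sym1_split by blast
  have dUV: "U \<inter> V = {}" unfolding Ueq Veq by auto
  have cU: "connectedin X U" unfolding X_def connectedin_subtopology
    using Inv_connected tX tUV unfolding U_def X_def by auto
  have cV: "connectedin X V" unfolding X_def connectedin_subtopology
    using Typ_connected tX tUV V1 unfolding X_def by auto
  have nU: "U \<noteq> {}" unfolding U_def using cls_Xsp[OF I_SL3] by blast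
  have nV: "V \<noteq> {}" unfolding V1 using mJ_Neg1 by blast
  have "connected_components_of X = {U, V}" by (rule two_comps[OF tUV dUV oU oV cU cV nU nV])
  moreover have "U \<noteq> V" using dUV nU by blast
  ultimately show ?thesis unfolding X_def U_def V_def by simp
qed


end
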